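(* Let $K$ be an algebraically closed field of characteristic zero, let $n\ge 3$, let $R=K[x_1,\dots,x_n]$ and let $S=K[X_1,\dots,X_n]$ be the divided power algebra, viewed as an $R$-module via contraction. Let $1\le r\le n-1$, let $a_1,\dots,a_n\ge 0$ and $b_1,\dots,b_n\ge 1$ be integers with $\sum_{i=1}^r b_i=\sum_{j=r+1}^n b_j>0$, and consider the binomial $$F=X_1^{a_1}X_2^{a_2}\cdots X_n^{a_n}\left(X_1^{b_1}X_2^{b_2}\cdots X_r^{b_r}-X_{r+1}^{b_{r+1}}\cdots X_n^{b_n}\right)\in S.$$ Then $A_F=R/\operatorname{Ann}_R(F)$ is a complete intersection if and only if, after changing coordinates (relabeling the variables and, if necessary, interchanging the roles of the two monomial factors, i.e. replacing $F$ by $-F$, which does not change $\operatorname{Ann}_R(F)$), we have $r=n-1$ and there exists an integer $1\le i\le n-1$ such that $a_i<q\,b_i$, where $q=\left\lfloor \frac{a_n+1}{b_n}\right\rfloor$. Moreover, in this case, setting $m=\min\left\{\left\lfloor \frac{a_j}{b_j}\right\rfloor \mid 1\le j\le n-1\right\}+1$, we have $$\operatorname{Ann}_R(F)=\left(x_1^{a_1+b_1+1},x_2^{a_2+b_2+1},\dots,x_{n-1}^{a_{n-1}+b_{n-1}+1},\,G\right),\qquad G=x_n^{a_n+1}+\sum_{j=1}^m\left(x_1^{b_1}\cdots x_{n-1}^{b_{n-1}}\right)^{j}x_n^{a_n+1-jb_n}.$$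
   Context: The divided power algebra $S=K[X_1,\dots,X_n]$ is an $R$-module via the contraction action $x_i\circ X_j^k=\delta_{ij}X_j^{k-1}$ if $k>0$ and $0$ otherwise (extended multiplicatively and linearly), with $\deg X_i=\deg x_i=1$. For a homogeneous $F\in S$, $\operatorname{Ann}_R(F)=\{f\in R\mid f\circ F=0\}$, and $A_F=R/\operatorname{Ann}_R(F)$ is the associated Artinian Gorenstein graded $K$-algebra ($F$ is its Macaulay dual generator). $A_F$ is a complete intersection if $\operatorname{Ann}_R(F)$ is generated by a regular sequence (equivalently, by $n$ elements). *)

theory Defs
  imports "HOL-Library.Poly_Mapping" "HOL-Computational_Algebra.Polynomial"
begin

text \<open>Variables x_1..x_n (resp. X_1..X_n) are the indices 1..n.
  The same carrier type is used for R (with its usual ring structure) and, as a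
  K-vector space with basis the divided-power monomials X^[alpha], for S.\<close>

type_synonym 'k mpoly = "(nat \<Rightarrow>\<^sub>0 nat) \<Rightarrow>\<^sub>0 'k"

definition in_vars :: "nat \<Rightarrow> ('k::zero) mpoly \<Rightarrow> bool" where
  "in_vars n p \<longleftrightarrow> (\<forall>mm::nat \<Rightarrow>\<^sub>0 nat. mm \<in> Poly_Mapping.keys p \<longrightarrow> Poly_Mapping.keys mm \<subseteq> {1..n})"

definition contract :: "('k::comm_ring_1) mpoly \<Rightarrow> 'k mpoly \<Rightarrow> 'k mpoly" where
  "contract f F =
     (\<Sum>\<alpha>\<in>Poly_Mapping.keys f. \<Sum>\<beta>\<in>Poly_Mapping.keys F.
        if (\<forall>i. Poly_Mapping.lookup \<alpha> i \<le> Poly_Mapping.lookup \<beta> i)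
        then Poly_Mapping.single (\<beta> - \<alpha>) (Poly_Mapping.lookup f \<alpha> * Poly_Mapping.lookup F \<beta>) else 0)"

definition Ann :: "nat \<Rightarrow> ('k::comm_ring_1) mpoly \<Rightarrow> 'k mpoly set" where
  "Ann n F = {f. in_vars n f \<and> contract f F = 0}"

definition ideal_gen :: "nat \<Rightarrow> ('k::comm_ring_1) mpoly list \<Rightarrow> 'k mpoly set" where
  "ideal_gen n gs = {(\<Sum>i<length gs. h i * gs ! i) | h. \<forall>i. in_vars n (h i)}"

text \<open>A_F is a complete intersection: Ann_R(F) is generated by n elements of R.\<close>
definition is_CI :: "nat \<Rightarrow> ('k::comm_ring_1) mpoly \<Rightarrow> bool" where
  "is_CI n F \<longleftrightarrow> (\<exists>gs. length gs = n \<and> (\<forall>g\<in>set gs. in_vars n g) \<and> Ann n F = ideal_gen n gs)"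

definition expv :: "nat set \<Rightarrow> (nat \<Rightarrow> nat) \<Rightarrow> (nat \<Rightarrow>\<^sub>0 nat)" where
  "expv I e = (\<Sum>i\<in>I. Poly_Mapping.single i (e i))"

definition mon :: "(nat \<Rightarrow>\<^sub>0 nat) \<Rightarrow> ('k::comm_ring_1) mpoly" where
  "mon \<alpha> = Poly_Mapping.single \<alpha> 1"

definition xpow :: "nat \<Rightarrow> nat \<Rightarrow> ('k::comm_ring_1) mpoly" where
  "xpow i e = mon (Poly_Mapping.single i e)"

definition binomF :: "nat \<Rightarrow> nat \<Rightarrow> (nat \<Rightarrow> nat) \<Rightarrow> (nat \<Rightarrow> nat) \<Rightarrow> ('k::comm_ring_1) mpoly" where
  "binomF n r a b = mon (expv {1..n} a + expv {1..r} b) - mon (expv {1..n} a + expv {r+1..n} b)"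

definition alg_closed :: "'k::field itself \<Rightarrow> bool" where
  "alg_closed _ \<longleftrightarrow> (\<forall>p::'k poly. degree p > 0 \<longrightarrow> (\<exists>x. poly p x = 0))"

end

theory Submission
  imports Defs "Jordan_Normal_Form.Determinant"
begin
abbreviation lk where "lk \<equiv> Poly_Mapping.lookup"

definition lep :: "(nat \<Rightarrow>\<^sub>0 nat) \<Rightarrow> (nat \<Rightarrow>\<^sub>0 nat) \<Rightarrow> bool" where
  "lep \<alpha> \<beta> \<longleftrightarrow> (\<forall>i. lk \<alpha> i \<le> lk \<beta> i)"

lemma add_eq_iff_lep: "(\<beta> = \<alpha> + \<gamma>) \<longleftrightarrow> (lep \<alpha> \<beta> \<and> \<gamma> = \<beta> - \<alpha>)"
  by (auto simp: lep_def poly_mapping_eq_iff fun_eq_iff lookup_add lookup_minus)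

lemma lookup_contract:
  "lk (contract f F) \<gamma> = (\<Sum>\<alpha>\<in>Poly_Mapping.keys f. lk f \<alpha> * lk F (\<alpha> + \<gamma>))"
proof -
  have inner: "(\<Sum>\<beta>\<in>Poly_Mapping.keys F. lk (if (\<forall>i. lk \<alpha> i \<le> lk \<beta> i)
        then Poly_Mapping.single (\<beta> - \<alpha>) (lk f \<alpha> * lk F \<beta>) else 0) \<gamma>)
      = lk f \<alpha> * lk F (\<alpha> + \<gamma>)" for \<alpha>
  proof -
    have "(\<Sum>\<beta>\<in>Poly_Mapping.keys F. lk (if (\<forall>i. lk \<alpha> i \<le> lk \<beta> i)
        then Poly_Mapping.single (\<beta> - \<alpha>) (lk f \<alpha> * lk F \<beta>) else 0) \<gamma>)
      = (\<Sum>\<beta>\<in>Poly_Mapping.keys F. if \<beta> = \<alpha> + \<gamma> then lk f \<alpha> * lk F \<beta> else 0)"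
      apply (rule sum.cong[OF refl])
      using add_eq_iff_lep[of _ \<alpha> \<gamma>] by (auto simp: lookup_single lep_def when_def)
    also have "\<dots> = lk f \<alpha> * lk F (\<alpha> + \<gamma>)"
      by (simp add: sum.delta in_keys_iff)
    finally show ?thesis .
  qed
  show ?thesis unfolding contract_def by (simp add: lookup_sum inner)
qed

lemma lookup_contract_superset:
  assumes "finite S" "Poly_Mapping.keys f \<subseteq> S"
  shows "lk (contract f F) \<gamma> = (\<Sum>\<alpha>\<in>S. lk f \<alpha> * lk F (\<alpha> + \<gamma>))"
  unfolding lookup_contract
  by (rule sum.mono_neutral_left) (use assms in \<open>auto simp: in_keys_iff\<close>)

lemma contract_add: "lk (contract (f + g) F) \<gamma> = lk (contract f F) \<gamma> + lk (contract g F) \<gamma>"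
proof -
  let ?S = "Poly_Mapping.keys f \<union> Poly_Mapping.keys g"
  have k: "Poly_Mapping.keys (f + g) \<subseteq> ?S" by (rule keys_add)
  show ?thesis
    by (subst (1 2 3) lookup_contract_superset[of ?S]) 
       (use k in \<open>auto simp: lookup_add distrib_right sum.distrib\<close>)
qed

lemma contract_uminus: "lk (contract (- f) F) \<gamma> = - lk (contract f F) \<gamma>"
  unfolding lookup_contract by (simp add: sum_negf)

lemma contract_F_diff: "lk (contract f (F - G)) \<gamma> = lk (contract f F) \<gamma> - lk (contract f G) \<gamma>"
  unfolding lookup_contract by (simp add: lookup_minus right_diff_distrib sum_subtractf)

lemma contract_F_uminus: "lk (contract f (- G)) \<gamma> = - lk (contract f G) \<gamma>"
  unfolding lookup_contract by (simp add: sum_negf)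

lemma lookup_single_mult:
  "lk (Poly_Mapping.single \<beta> c * g) x = (if lep \<beta> x then c * lk g (x - \<beta>) else 0)"
proof -
  have "lk (Poly_Mapping.single \<beta> c * g) x = Sum_any (\<lambda>l. (c when \<beta> = l) * Sum_any (\<lambda>q. lk g q when x = l + q))"
    by (simp add: lookup_mult lookup_single)
  also have "\<dots> = Sum_any (\<lambda>l. (c * Sum_any (\<lambda>q. lk g q when x = l + q)) when \<beta> = l)"
    by (simp add: when_mult)
  also have "\<dots> = c * Sum_any (\<lambda>q. lk g q when x = \<beta> + q)"
    by (rule Sum_any_when_equal')
  also have "Sum_any (\<lambda>q. lk g q when x = \<beta> + q) = (if lep \<beta> x then lk g (x - \<beta>) else 0)"
  proof (cases "lep \<beta> x")
    case True
    then have "(\<lambda>q. lk g q when x = \<beta> + q) = (\<lambda>q. lk g q when q = x - \<beta>)"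
      using add_eq_iff_lep by (auto simp: when_def fun_eq_iff)
    then show ?thesis using True by (simp only:) simp
  next
    case False
    then have "(\<lambda>q. lk g q when x = \<beta> + q) = (\<lambda>q. 0)"
      using add_eq_iff_lep by (auto simp: when_def fun_eq_iff)
    then show ?thesis using False by (simp only:) simp
  qed
  finally show ?thesis by simp
qed

lemma poly_sum_monomials: "f = (\<Sum>k\<in>Poly_Mapping.keys f. Poly_Mapping.single k (lk f k))"
  by (rule poly_mapping_eqI) 
     (simp add: lookup_sum lookup_single when_def sum.delta in_keys_iff)

lemma keys_plus_nat: "Poly_Mapping.keys ((\<alpha>::nat \<Rightarrow>\<^sub>0 nat) + \<beta>) = Poly_Mapping.keys \<alpha> \<union> Poly_Mapping.keys \<beta>"
  by (auto simp: in_keys_iff lookup_add)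

lemma in_vars_0[simp]: "in_vars n 0" by (simp add: in_vars_def)
lemma in_vars_add: "in_vars n f \<Longrightarrow> in_vars n g \<Longrightarrow> in_vars n (f + g)"
  unfolding in_vars_def by (auto dest!: subsetD[OF keys_add])
lemma in_vars_uminus: "in_vars n (f::('k::ab_group_add) mpoly) \<Longrightarrow> in_vars n (- f)"
  unfolding in_vars_def by (simp add: keys_minus)
lemma in_vars_diff: "in_vars n (f::('k::ab_group_add) mpoly) \<Longrightarrow> in_vars n g \<Longrightarrow> in_vars n (f - g)"
  by (metis in_vars_add in_vars_uminus diff_conv_add_uminus)
lemma in_vars_single: "Poly_Mapping.keys \<beta> \<subseteq> {1..n} \<Longrightarrow> in_vars n (Poly_Mapping.single \<beta> c)"
  unfolding in_vars_def by simp
lemma in_vars_mon: "Poly_Mapping.keys \<beta> \<subseteq> {1..n} \<Longrightarrow> in_vars n (Defs.mon \<beta>)"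
  unfolding Defs.mon_def by (rule in_vars_single)
lemma in_vars_mult: "in_vars n f \<Longrightarrow> in_vars n g \<Longrightarrow> in_vars n (f * g)"
  unfolding in_vars_def
proof (intro allI impI)
  fix mm assume a: "\<forall>mm. mm \<in> Poly_Mapping.keys f \<longrightarrow> Poly_Mapping.keys mm \<subseteq> {1..n}"
    "\<forall>mm. mm \<in> Poly_Mapping.keys g \<longrightarrow> Poly_Mapping.keys mm \<subseteq> {1..n}"
    and "mm \<in> Poly_Mapping.keys (f * g)"
  then obtain x y where "mm = x + y" "x \<in> Poly_Mapping.keys f" "y \<in> Poly_Mapping.keys g"
    using keys_mult[of f g] by blast
  then show "Poly_Mapping.keys mm \<subseteq> {1..n}" using a by (simp add: keys_plus_nat)
qed
lemma in_vars_sum: "(\<And>i. i \<in> I \<Longrightarrow> in_vars n (f i)) \<Longrightarrow> in_vars n (\<Sum>i\<in>I. f i)"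
  by (induction I rule: infinite_finite_induct) (auto intro: in_vars_add)
lemma in_vars_prod: "(\<And>i. i \<in> I \<Longrightarrow> in_vars n (f i)) \<Longrightarrow> in_vars n (\<Prod>i\<in>I. f i)"
  apply (induction I rule: infinite_finite_induct) 
    apply (auto intro!: in_vars_mult)
  by (auto simp: in_vars_def one_poly_mapping.rep_eq Poly_Mapping.keys.rep_eq when_def lookup_one)
lemma in_vars_power: "in_vars n f \<Longrightarrow> in_vars n (f ^ k)"
  apply (induction k) 
   apply (auto intro!: in_vars_mult)
  by (auto simp: in_vars_def lookup_one in_keys_iff when_def)

lemma contract_zero: "contract 0 F = 0"
  unfolding contract_def by simp

lemma contract_sum: "lk (contract (\<Sum>i\<in>I. f i) F) \<gamma> = (\<Sum>i\<in>I. lk (contract (f i) F) \<gamma>)"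
  by (induction I rule: infinite_finite_induct) (auto simp: contract_zero contract_add)

lemma plus_left_inj_pm: "inj ((+) (\<beta>::nat \<Rightarrow>\<^sub>0 nat))"
  by (rule injI) simp

lemma contract_single_mult:
  "lk (contract (Poly_Mapping.single \<beta> c * g) F) \<gamma> = c * lk (contract g F) (\<beta> + \<gamma>)"
proof -
  let ?S = "(+) \<beta> ` Poly_Mapping.keys g"
  have sub: "Poly_Mapping.keys (Poly_Mapping.single \<beta> c * g) \<subseteq> ?S"
    using keys_mult[of "Poly_Mapping.single \<beta> c" g] by (auto split: if_splits)
  have l: "lep \<beta> (\<beta> + \<alpha>)" for \<alpha> by (simp add: lep_def lookup_add)
  have "lk (contract (Poly_Mapping.single \<beta> c * g) F) \<gamma>
       = (\<Sum>\<alpha>\<in>?S. lk (Poly_Mapping.single \<beta> c * g) \<alpha> * lk F (\<alpha> + \<gamma>))"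
    by (rule lookup_contract_superset) (use sub in auto)
  also have "\<dots> = (\<Sum>\<alpha>\<in>Poly_Mapping.keys g. lk (Poly_Mapping.single \<beta> c * g) (\<beta> + \<alpha>) * lk F (\<beta> + \<alpha> + \<gamma>))"
    by (subst sum.reindex) (auto intro: inj_on_subset[OF plus_left_inj_pm])
  also have "\<dots> = (\<Sum>\<alpha>\<in>Poly_Mapping.keys g. c * (lk g \<alpha> * lk F (\<alpha> + (\<beta> + \<gamma>))))"
    by (rule sum.cong) (simp_all add: lookup_single_mult l, simp add: ac_simps)
  also have "\<dots> = c * lk (contract g F) (\<beta> + \<gamma>)"
    by (simp add: lookup_contract sum_distrib_left)
  finally show ?thesis .
qed

lemma contract_mult:
  "lk (contract (H * g) F) \<gamma> = (\<Sum>k\<in>Poly_Mapping.keys H. lk H k * lk (contract g F) (k + \<gamma>))"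
proof -
  have "H * g = (\<Sum>k\<in>Poly_Mapping.keys H. Poly_Mapping.single k (lk H k) * g)"
    by (subst poly_sum_monomials[of H]) (simp add: sum_distrib_right)
  then show ?thesis by (simp add: contract_sum contract_single_mult)
qed

lemma Ann_iff: "f \<in> Ann n F \<longleftrightarrow> in_vars n f \<and> (\<forall>\<gamma>. lk (contract f F) \<gamma> = 0)"
  unfolding Ann_def by (auto simp: poly_mapping_eq_iff fun_eq_iff)

lemma Ann_0: "0 \<in> Ann n F" by (simp add: Ann_iff contract_zero)
lemma Ann_add: "f \<in> Ann n F \<Longrightarrow> g \<in> Ann n F \<Longrightarrow> f + g \<in> Ann n F"
  by (simp add: Ann_iff contract_add in_vars_add)
lemma Ann_uminus: "f \<in> Ann n F \<Longrightarrow> - f \<in> Ann n F"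
  by (simp add: Ann_iff contract_uminus in_vars_uminus)
lemma Ann_diff: "f \<in> Ann n F \<Longrightarrow> g \<in> Ann n F \<Longrightarrow> f - g \<in> Ann n F"
  using Ann_add[of f n F "- g"] Ann_uminus[of g n F] by simp
lemma Ann_sum: "(\<And>i. i \<in> I \<Longrightarrow> f i \<in> Ann n F) \<Longrightarrow> (\<Sum>i\<in>I. f i) \<in> Ann n F"
  by (induction I rule: infinite_finite_induct) (auto intro: Ann_add Ann_0)
lemma Ann_mult: "g \<in> Ann n F \<Longrightarrow> in_vars n H \<Longrightarrow> H * g \<in> Ann n F"
  by (simp add: Ann_iff contract_mult in_vars_mult)
lemma Ann_neg_F: "Ann n (- F) = Ann n F"
  by (auto simp: Ann_iff contract_F_uminus)

lemma ideal_gen_sub_Ann: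
  assumes "\<forall>g\<in>set gs. g \<in> Ann n F"
  shows "ideal_gen n gs \<subseteq> Ann n F"
  unfolding ideal_gen_def using assms by (auto intro!: Ann_sum Ann_mult)

lemma lookup_mon: "lk (Defs.mon A) x = (if x = A then 1 else 0)"
  by (simp add: Defs.mon_def lookup_single when_def)

lemma lep_add_diff: "lep \<gamma> A \<Longrightarrow> \<gamma> + (A - \<gamma>) = (A::nat \<Rightarrow>\<^sub>0 nat)"
  by (auto simp: lep_def poly_mapping_eq_iff fun_eq_iff lookup_minus lookup_add)

lemma contract_mon:
  "lk (contract f (Defs.mon A)) \<gamma> = (if lep \<gamma> A then lk f (A - \<gamma>) else 0)"
proof -
  have "lk (contract f (Defs.mon A)) \<gamma> = (\<Sum>\<alpha>\<in>Poly_Mapping.keys f. if \<alpha> = A - \<gamma> \<and> lep \<gamma> A then lk f \<alpha> else 0)"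
    unfolding lookup_contract
    apply (rule sum.cong[OF refl])
    using add_eq_iff_lep[of A \<gamma>] by (auto simp: lookup_mon add.commute lep_add_diff)
  also have "\<dots> = (if lep \<gamma> A then lk f (A - \<gamma>) else 0)"
    by (auto simp: sum.delta' in_keys_iff)
  finally show ?thesis .
qed

lemma contract_binom:
  "lk (contract f (Defs.mon A - Defs.mon B)) \<gamma> =
     (if lep \<gamma> A then lk f (A - \<gamma>) else 0) - (if lep \<gamma> B then lk f (B - \<gamma>) else 0)"
  by (simp add: contract_F_diff contract_mon)

lemma diff_diff_pm: "lep \<mu> A \<Longrightarrow> A - (A - \<mu>) = (\<mu>::nat \<Rightarrow>\<^sub>0 nat)"
  by (auto simp: lep_def poly_mapping_eq_iff fun_eq_iff lookup_minus)
lemma lep_diff: "lep (A - \<mu>) (A::nat \<Rightarrow>\<^sub>0 nat)"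
  by (auto simp: lep_def lookup_minus)

lemma coeff_rel:
  assumes "h \<in> Ann n (Defs.mon A - Defs.mon B)" "lep \<mu> A"
  shows "lk h \<mu> = (if lep (A - \<mu>) B then lk h (B - (A - \<mu>)) else 0)"
proof -
  have "lk (contract h (Defs.mon A - Defs.mon B)) (A - \<mu>) = 0" using assms(1) by (simp add: Ann_iff)
  then show ?thesis unfolding contract_binom using assms(2) 
    by (simp add: diff_diff_pm lep_diff split: if_splits)
qed

lemma mon_in_Ann:
  assumes "Poly_Mapping.keys p \<subseteq> {1..n}" "\<not> lep p A" "\<not> lep p B"
  shows "Defs.mon p \<in> Ann n (Defs.mon A - Defs.mon B)"
proof -
  have "A - \<gamma> \<noteq> p" "B - \<gamma> \<noteq> p" for \<gamma>
    using lep_diff[of A \<gamma>] lep_diff[of B \<gamma>] assms by auto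
  then show ?thesis using assms
    by (auto simp: Ann_iff contract_binom lookup_mon in_vars_mon)
qed

lemma no_factor_identity:
  fixes C W :: "nat \<Rightarrow> nat \<Rightarrow> 'a::field"
  assumes eq: "\<And>k l. k < Suc n \<Longrightarrow> l < Suc n \<Longrightarrow> (\<Sum>i<n. C k i * W i l) = (if k = l then 1 else 0)"
  shows False
proof -
  define A :: "'a mat" where "A = mat (Suc n) (Suc n) (\<lambda>(k,i). if i < n then C k i else 0)"
  define B :: "'a mat" where "B = mat (Suc n) (Suc n) (\<lambda>(i,l). if i < n then W i l else 0)"
  have A: "A \<in> carrier_mat (Suc n) (Suc n)" and B: "B \<in> carrier_mat (Suc n) (Suc n)"
    by (auto simp: A_def B_def)
  have AB: "A * B = 1\<^sub>m (Suc n)"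
  proof (rule eq_matI)
    fix k l assume k: "k < dim_row (1\<^sub>m (Suc n))" and l: "l < dim_col (1\<^sub>m (Suc n))"
    have "(A * B) $$ (k, l) = (\<Sum>i\<in>{0..<Suc n}. A $$ (k, i) * B $$ (i, l))"
      using k l A B by (simp add: scalar_prod_def)
    also have "\<dots> = (\<Sum>i\<in>{0..<n}. C k i * W i l)"
      using k l by (simp add: A_def B_def)
    also have "\<dots> = 1\<^sub>m (Suc n) $$ (k, l)"
      using eq[of k l] k l by (simp add: atLeast0LessThan)
    finally show "(A * B) $$ (k, l) = 1\<^sub>m (Suc n) $$ (k, l)" .
  qed (use A B in auto)
  have "det B = 0"
  proof -
    have z: "B $$ (n, p n) = 0" if p: "p permutes {0..<Suc n}" for p
    proof -
      have "p n < Suc n" using p by (simp add: permutes_in_image)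
      then show ?thesis by (simp add: B_def)
    qed
    show ?thesis using B z unfolding det_def by simp
  qed
  then have "det (A * B) = 0" using det_mult[OF A B] by simp
  then show False using AB by simp
qed

lemma in_vars_one[simp]: "in_vars n 1"
  by (auto simp: in_vars_def in_keys_iff lookup_one when_def)

lemma lambda_mult:
  fixes F :: "'k::comm_ring_1 mpoly"
  assumes g: "g \<in> Ann n F" and H: "in_vars n H"
    and wit: "\<forall>h\<in>Ann n F. \<forall>j. 1 \<le> lk p j \<longrightarrow> lk h (p - Poly_Mapping.single j 1) = 0"
  shows "lk (H * g) p = lk H 0 * lk g p"
proof -
  have "H * g = (\<Sum>\<beta>\<in>Poly_Mapping.keys H. Poly_Mapping.single \<beta> (lk H \<beta>) * g)"
    by (subst poly_sum_monomials[of H]) (simp add: sum_distrib_right)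
  then have "lk (H * g) p = (\<Sum>\<beta>\<in>Poly_Mapping.keys H. if lep \<beta> p then lk H \<beta> * lk g (p - \<beta>) else 0)"
    by (simp add: lookup_sum lookup_single_mult)
  also have "\<dots> = (\<Sum>\<beta>\<in>Poly_Mapping.keys H. if \<beta> = 0 then lk H \<beta> * lk g p else 0)"
  proof (rule sum.cong[OF refl])
    fix \<beta> assume b: "\<beta> \<in> Poly_Mapping.keys H"
    show "(if lep \<beta> p then lk H \<beta> * lk g (p - \<beta>) else 0) = (if \<beta> = 0 then lk H \<beta> * lk g p else 0)"
    proof (cases "\<beta> = 0")
      case True then show ?thesis by (simp add: lep_def)
    next
      case False
      then obtain j where j: "lk \<beta> j \<noteq> 0" by (metis lookup_zero poly_mapping_eqI)
      show ?thesis
      proof (cases "lep \<beta> p")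
        case lp: True
        define e :: "nat \<Rightarrow>\<^sub>0 nat" where "e = Poly_Mapping.single j 1"
        define \<beta>' where "\<beta>' = \<beta> - e"
        have kb: "Poly_Mapping.keys \<beta>' \<subseteq> {1..n}"
        proof -
          have "Poly_Mapping.keys \<beta>' \<subseteq> Poly_Mapping.keys \<beta>"
            by (auto simp: \<beta>'_def in_keys_iff lookup_minus)
          moreover have "Poly_Mapping.keys \<beta> \<subseteq> {1..n}" using H b by (simp add: in_vars_def)
          ultimately show ?thesis by blast
        qed
        have hA: "Poly_Mapping.single \<beta>' 1 * g \<in> Ann n F"
          by (rule Ann_mult[OF g in_vars_single[OF kb]])
        have pj: "1 \<le> lk p j" using lp j unfolding lep_def by (metis less_one not_le order_trans)
        have "lk (Poly_Mapping.single \<beta>' 1 * g) (p - e) = 0"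
          using wit hA pj by (simp add: e_def)
        moreover have "lep \<beta>' (p - e)" using lp j
          by (auto simp: lep_def \<beta>'_def e_def lookup_minus lookup_single when_def intro!: diff_le_mono)
        moreover have "(p - e) - \<beta>' = p - \<beta>" using lp j
          by (auto simp: lep_def \<beta>'_def e_def lookup_minus lookup_single when_def poly_mapping_eq_iff fun_eq_iff)
        ultimately have "lk g (p - \<beta>) = 0" by (simp add: lookup_single_mult)
        then show ?thesis using False by simp
      next
        case False then show ?thesis using \<open>\<beta> \<noteq> 0\<close> by simp
      qed
    qed
  qed
  also have "\<dots> = lk H 0 * lk g p"
    by (simp add: sum.delta in_keys_iff)
  finally show ?thesis .
qed

lemma witness_noCI:
  fixes F :: "'k::field mpoly"
  assumes wA: "\<forall>k<Suc n. w k \<in> Ann n F"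
    and wd: "\<forall>k<Suc n. \<forall>l<Suc n. lk (w k) (p l) = (if k = l then 1 else 0)"
    and wit: "\<forall>k<Suc n. \<forall>h\<in>Ann n F. \<forall>j. 1 \<le> lk (p k) j \<longrightarrow> lk h (p k - Poly_Mapping.single j 1) = 0"
  shows "\<not> is_CI n F"
proof
  assume "is_CI n F"
  then obtain gs where gs: "length gs = n" "Ann n F = ideal_gen n gs" unfolding is_CI_def by blast
  have gA: "gs ! i \<in> Ann n F" if "i < n" for i
  proof -
    have "(\<Sum>j<length gs. (if j = i then 1 else 0) * gs ! j) = (\<Sum>j<length gs. if j = i then gs ! j else 0)"
      by (rule sum.cong) auto
    then have "gs ! i = (\<Sum>j<length gs. (if j = i then 1 else 0) * gs ! j)"
      using that gs(1) by (simp add: sum.delta)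
    moreover have "\<forall>j. in_vars n (if j = i then 1 else 0 :: 'k mpoly)" by simp
    ultimately have "\<exists>h. gs ! i = (\<Sum>j<length gs. h j * gs ! j) \<and> (\<forall>j. in_vars n (h j))"
      by (intro exI[of _ "\<lambda>j. if j = i then 1 else 0"]) simp
    then have "gs ! i \<in> ideal_gen n gs" unfolding ideal_gen_def by simp
    then show ?thesis using gs(2) by simp
  qed
  have "\<forall>k. \<exists>h. k < Suc n \<longrightarrow> w k = (\<Sum>i<n. h i * gs ! i) \<and> (\<forall>i. in_vars n (h i))"
    using wA gs unfolding ideal_gen_def by auto
  then obtain hh where hh: "\<And>k. k < Suc n \<Longrightarrow> w k = (\<Sum>i<n. hh k i * gs ! i) \<and> (\<forall>i. in_vars n (hh k i))"
    by metis
  show False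
  proof (rule no_factor_identity[of n "\<lambda>k i. lk (hh k i) 0" "\<lambda>i l. lk (gs ! i) (p l)"])
    fix k l assume k: "k < Suc n" and l: "l < Suc n"
    have "(if k = l then 1 else 0) = lk (w k) (p l)" using wd k l by simp
    also have "\<dots> = (\<Sum>i<n. lk (hh k i * gs ! i) (p l))" using hh[OF k] by (simp add: lookup_sum)
    also have "\<dots> = (\<Sum>i<n. lk (hh k i) 0 * lk (gs ! i) (p l))"
      by (rule sum.cong[OF refl], rule lambda_mult) (use gA hh[OF k] wit l in auto)
    finally show "(\<Sum>i<n. lk (hh k i) 0 * lk (gs ! i) (p l)) = (if k = l then 1 else 0)" by simp
  qed
qed

lemma lookup_expv: "finite I \<Longrightarrow> lk (expv I e) x = (if x \<in> I then e x else 0)"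
  unfolding expv_def by (simp add: lookup_sum lookup_single when_def sum.delta')

lemma keys_expv: "finite I \<Longrightarrow> Poly_Mapping.keys (expv I e) \<subseteq> I"
  by (auto simp: in_keys_iff lookup_expv split: if_splits)

lemma zeroA:
  assumes "h \<in> Ann n (Defs.mon A - Defs.mon B)" "lep \<mu> A" "\<not> lep (A - \<mu>) B"
  shows "lk h \<mu> = 0"
  using coeff_rel[OF assms(1,2)] assms(3) by simp

lemma Ann_swap: "Ann n (Defs.mon A - Defs.mon B) = Ann n (Defs.mon B - Defs.mon A)"
  by (metis Ann_neg_F minus_diff_eq)

lemma zeroB:
  assumes "h \<in> Ann n (Defs.mon A - Defs.mon B)" "lep \<mu> B" "\<not> lep (B - \<mu>) A"
  shows "lk h \<mu> = 0"
proof -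
  have "h \<in> Ann n (Defs.mon B - Defs.mon A)" using assms(1) Ann_swap by blast
  then show ?thesis by (rule zeroA[OF _ assms(2,3)])
qed

lemma lookup_sum_mon_inj:
  assumes "inj_on m J" "finite J"
  shows "lk (\<Sum>j\<in>J. Defs.mon (m j) :: 'k::comm_ring_1 mpoly) \<mu> = (if \<mu> \<in> m ` J then 1 else 0)"
proof -
  have "(\<Sum>j\<in>J. Defs.mon (m j) :: 'k mpoly) = (\<Sum>\<nu>\<in>m ` J. Defs.mon \<nu>)"
    using assms by (simp add: sum.reindex)
  then show ?thesis using assms by (simp add: lookup_sum lookup_mon sum.delta)
qed

lemma chain_Ann:
  fixes m :: "nat \<Rightarrow> nat \<Rightarrow>\<^sub>0 nat"
  assumes inj: "inj_on m {0..N}" and keys: "\<forall>j\<le>N. Poly_Mapping.keys (m j) \<subseteq> {1..n}"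
    and c1: "\<forall>j\<in>{1..N}. lep (m j) A \<and> lep (m (j-1)) B \<and> A - m j = B - m (j-1)"
    and c2: "\<not> lep (m 0) A" and c3: "\<not> lep (m N) B"
  shows "(\<Sum>j=0..N. Defs.mon (m j) :: 'k::comm_ring_1 mpoly) \<in> Ann n (Defs.mon A - Defs.mon B)"
proof -
  let ?S = "m ` {0..N}"
  have L: "lk (\<Sum>j=0..N. Defs.mon (m j) :: 'k mpoly) \<mu> = (if \<mu> \<in> ?S then 1 else 0)" for \<mu>
    by (rule lookup_sum_mon_inj[OF inj]) simp
  have iv: "in_vars n (\<Sum>j=0..N. Defs.mon (m j) :: 'k mpoly)"
    using keys by (intro in_vars_sum in_vars_mon) auto
  have eq: "(lep \<gamma> A \<and> A - \<gamma> \<in> ?S) \<longleftrightarrow> (lep \<gamma> B \<and> B - \<gamma> \<in> ?S)" for \<gamma>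
  proof
    assume "lep \<gamma> A \<and> A - \<gamma> \<in> ?S"
    then obtain j where j: "j \<le> N" "A - \<gamma> = m j" and g: "lep \<gamma> A" by auto
    have "lep (m j) A" using lep_diff[of A \<gamma>] j by simp
    then have "j \<noteq> 0" using c2 by (metis)
    then have j1: "j \<in> {1..N}" using j by auto
    have "\<gamma> = A - m j" using diff_diff_pm[OF g] j by simp
    also have "\<dots> = B - m (j - 1)" using c1 j1 by auto
    finally have ge: "\<gamma> = B - m (j - 1)" .
    have "B - \<gamma> = m (j - 1)" using ge diff_diff_pm c1 j1 by auto
    then show "lep \<gamma> B \<and> B - \<gamma> \<in> ?S" using ge lep_diff[of B] j by auto
  next
    assume "lep \<gamma> B \<and> B - \<gamma> \<in> ?S"
    then obtain j where j: "j \<le> N" "B - \<gamma> = m j" and g: "lep \<gamma> B" by auto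
    have "lep (m j) B" using lep_diff[of B \<gamma>] j by simp
    then have "j \<noteq> N" using c3 by (metis)
    then have j1: "Suc j \<in> {1..N}" using j by auto
    have "\<gamma> = B - m j" using diff_diff_pm[OF g] j by simp
    also have "\<dots> = A - m (Suc j)" using c1 j1 by fastforce
    finally have ge: "\<gamma> = A - m (Suc j)" .
    have "A - \<gamma> = m (Suc j)" using ge diff_diff_pm c1 j1 by fastforce
    then show "lep \<gamma> A \<and> A - \<gamma> \<in> ?S" using ge lep_diff[of A] j1 by auto
  qed
  show ?thesis
    unfolding Ann_iff
  proof (intro conjI allI iv)
    fix \<gamma>
    show "lk (contract (\<Sum>j=0..N. Defs.mon (m j) :: 'k mpoly) (Defs.mon A - Defs.mon B)) \<gamma> = 0"
      unfolding contract_binom L using eq[of \<gamma>] by auto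
  qed
qed

lemma box_zero:
  fixes f :: "(nat \<Rightarrow>\<^sub>0 nat) \<Rightarrow> nat"
  assumes h: "h \<in> Ann n (Defs.mon A - Defs.mon B)"
    and supp: "\<forall>\<alpha>. lk h \<alpha> \<noteq> 0 \<longrightarrow> lep \<alpha> A"
    and dec: "\<forall>\<alpha>. lep \<alpha> A \<longrightarrow> lep (A - \<alpha>) B \<longrightarrow> lep (B - (A - \<alpha>)) A \<longrightarrow> f (B - (A - \<alpha>)) < f \<alpha>"
  shows "h = 0"
proof -
  have "lk h \<alpha> = 0" for \<alpha>
  proof (induction "f \<alpha>" arbitrary: \<alpha> rule: less_induct)
    case less
    show ?case
    proof (cases "lep \<alpha> A")
      case False then show ?thesis using supp by auto
    next
      case True
      have r: "lk h \<alpha> = (if lep (A - \<alpha>) B then lk h (B - (A - \<alpha>)) else 0)"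
        by (rule coeff_rel[OF h True])
      show ?thesis
      proof (cases "lep (A - \<alpha>) B")
        case False then show ?thesis using r by simp
      next
        case T2: True
        show ?thesis
        proof (cases "lep (B - (A - \<alpha>)) A")
          case False then show ?thesis using r supp by auto
        next
          case True
          then have "f (B - (A - \<alpha>)) < f \<alpha>" using dec \<open>lep \<alpha> A\<close> T2 by blast
          then show ?thesis using r less by simp
        qed
      qed
    qed
  qed
  then show ?thesis by (simp add: poly_mapping_eqI)
qed

locale sconf =
  fixes n s :: nat and Os :: "nat set" and a b :: "nat \<Rightarrow> nat"
  assumes n3: "n \<ge> 3" and sn: "s \<in> {1..n}" and O_def: "Os = {1..n} - {s}"
    and bpos: "\<forall>i\<in>{1..n}. b i \<ge> 1"
begin

definition A :: "nat \<Rightarrow>\<^sub>0 nat" where "A = expv {1..n} a + expv Os b"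
definition B :: "nat \<Rightarrow>\<^sub>0 nat" where "B = expv {1..n} a + Poly_Mapping.single s (b s)"

lemma finO: "finite Os" using O_def by simp
lemma sO: "s \<notin> Os" using O_def by simp
lemma O_sub: "Os \<subseteq> {1..n}" using O_def by auto
lemma bO: "k \<in> Os \<Longrightarrow> b k \<ge> 1" using bpos O_sub by auto
lemma bs: "b s \<ge> 1" using bpos sn by auto

lemma lkA: "lk A x = (if x \<in> {1..n} then a x else 0) + (if x \<in> Os then b x else 0)"
  unfolding A_def using finO by (simp add: lookup_add lookup_expv)
lemma lkB: "lk B x = (if x \<in> {1..n} then a x else 0) + (if x = s then b s else 0)"
  unfolding B_def by (simp add: lookup_add lookup_expv lookup_single when_def)

lemma lkA_O: "x \<in> Os \<Longrightarrow> lk A x = a x + b x" using O_sub by (auto simp: lkA)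
lemma lkA_s: "lk A s = a s" using sn sO by (simp add: lkA)
lemma lkB_O: "x \<in> Os \<Longrightarrow> lk B x = a x" using O_sub sO by (auto simp: lkB)
lemma lkB_s: "lk B s = a s + b s" using sn by (simp add: lkB)
lemma lk_out: "x \<notin> {1..n} \<Longrightarrow> lk A x = 0 \<and> lk B x = 0" using O_sub sn by (auto simp: lkA lkB)

lemma cases_x: obtains "x = s" | "x \<in> Os" | "x \<notin> {1..n}"
  using O_def by auto

lemma chainA:
  assumes h: "h \<in> Ann n (Defs.mon A - Defs.mon B)"
  shows "lep \<mu> A \<Longrightarrow> lk \<mu> s + K * b s \<le> a s \<Longrightarrow> (\<exists>k\<in>Os. lk \<mu> k < (K+1) * b k) \<Longrightarrow> lk h \<mu> = 0"
proof (induction K arbitrary: \<mu>)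
  case 0
  then obtain k where k: "k \<in> Os" "lk \<mu> k < b k" by auto
  have "\<not> lep (A - \<mu>) B"
    unfolding lep_def using k 0 by (auto simp: lookup_minus lkA_O lkB_O intro!: exI[of _ k])
  then show ?case using zeroA[OF h "0.prems"(1)] by simp
next
  case (Suc K)
  show ?case
  proof (cases "lep (A - \<mu>) B")
    case False then show ?thesis using zeroA[OF h Suc.prems(1)] by simp
  next
    case True
    define \<mu>' where "\<mu>' = B - (A - \<mu>)"
    have r: "lk h \<mu> = lk h \<mu>'" using coeff_rel[OF h Suc.prems(1)] True by (simp add: \<mu>'_def)
    have mA: "lk \<mu> x \<le> lk A x" for x using Suc.prems(1) by (simp add: lep_def)
    have mB: "lk A x - lk \<mu> x \<le> lk B x" for x using True by (simp add: lep_def lookup_minus)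
    have lk': "lk \<mu>' x = lk B x - (lk A x - lk \<mu> x)" for x by (simp add: \<mu>'_def lookup_minus)
    have "lk h \<mu>' = 0"
    proof (rule Suc.IH)
      show "lep \<mu>' A" unfolding lep_def
      proof
        fix x show "lk \<mu>' x \<le> lk A x"
          using mA[of x] mB[of x] Suc.prems(2) lk_out[of x]
          by (cases x rule: cases_x) (auto simp: lk' lkA_O lkB_O lkA_s lkB_s)
      qed
      show "lk \<mu>' s + K * b s \<le> a s"
        using mA[of s] Suc.prems(2) by (simp add: lk' lkA_s lkB_s)
      obtain k where k: "k \<in> Os" "lk \<mu> k < (Suc K + 1) * b k" using Suc.prems(3) by auto
      have "lk \<mu>' k < (K + 1) * b k" using k mA[of k] by (simp add: lk' lkA_O lkB_O)
      then show "\<exists>k\<in>Os. lk \<mu>' k < (K + 1) * b k" using k by auto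
    qed
    then show ?thesis using r by simp
  qed
qed

lemma chainB0:
  assumes h: "h \<in> Ann n (Defs.mon A - Defs.mon B)" and "lep \<mu> B" "lk \<mu> s < b s"
  shows "lk h \<mu> = 0"
proof (rule zeroB[OF h assms(2)])
  show "\<not> lep (B - \<mu>) A" unfolding lep_def using assms(3) 
    by (auto simp: lookup_minus lkA_s lkB_s intro!: exI[of _ s])
qed


definition chm :: "nat \<Rightarrow> nat \<Rightarrow> nat \<Rightarrow> nat \<Rightarrow>\<^sub>0 nat" where
  "chm c i j = Poly_Mapping.single i c + expv Os (\<lambda>k. j * b k) + Poly_Mapping.single s (a s + 1 - j * b s)"

lemma lk_chm: "i \<in> Os \<Longrightarrow> lk (chm c i j) x =
   (if x = i then c else 0) + (if x \<in> Os then j * b x else 0) + (if x = s then a s + 1 - j * b s else 0)"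
  unfolding chm_def using finO by (simp add: lookup_add lookup_expv lookup_single when_def)

lemma lk_chm_i: "i \<in> Os \<Longrightarrow> lk (chm c i j) i = c + j * b i" using sO by (auto simp: lk_chm)
lemma lk_chm_O: "i \<in> Os \<Longrightarrow> x \<in> Os \<Longrightarrow> x \<noteq> i \<Longrightarrow> lk (chm c i j) x = j * b x" using sO by (auto simp: lk_chm)
lemma lk_chm_s: "i \<in> Os \<Longrightarrow> lk (chm c i j) s = a s + 1 - j * b s" using sO by (auto simp: lk_chm)
lemma lk_chm_out: "i \<in> Os \<Longrightarrow> x \<notin> {1..n} \<Longrightarrow> lk (chm c i j) x = 0" using sO O_sub sn by (auto simp: lk_chm)

lemma keys_chm: "i \<in> Os \<Longrightarrow> Poly_Mapping.keys (chm c i j) \<subseteq> {1..n}"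
proof
  fix x assume i: "i \<in> Os" and "x \<in> Poly_Mapping.keys (chm c i j)"
  then have "lk (chm c i j) x \<noteq> 0" by (simp add: in_keys_iff)
  then show "x \<in> {1..n}" using lk_chm_out[OF i, of x c j] by (cases "x \<in> {1..n}") simp_all
qed

lemma chain_in_Ann:
  assumes i: "i \<in> Os" and Nb: "N * b s \<le> a s + 1"
    and le: "N \<ge> 1 \<Longrightarrow> \<forall>k\<in>Os. (N - 1) * b k + (if k = i then c else 0) \<le> a k"
    and gt: "\<exists>k\<in>Os. a k < N * b k + (if k = i then c else 0)"
  shows "(\<Sum>j=0..N. Defs.mon (chm c i j) :: 'k::comm_ring_1 mpoly) \<in> Ann n (Defs.mon A - Defs.mon B)"
proof (rule chain_Ann)
  show "inj_on (chm c i) {0..N}"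
  proof (rule inj_onI)
    fix j j' assume "chm c i j = chm c i j'"
    then have "lk (chm c i j) i = lk (chm c i j') i" by simp
    then have "j * b i = j' * b i" using i by (simp add: lk_chm_i)
    then show "j = j'" using bO[OF i] by simp
  qed
  show "\<forall>j\<le>N. Poly_Mapping.keys (chm c i j) \<subseteq> {1..n}" using keys_chm[OF i] by auto
  show "\<not> lep (chm c i 0) A" unfolding lep_def using i by (auto simp: lk_chm_s lkA_s intro!: exI[of _ s])
  show "\<not> lep (chm c i N) B"
  proof -
    obtain k where k: "k \<in> Os" "a k < N * b k + (if k = i then c else 0)" using gt by auto
    then have "lk (chm c i N) k > lk B k" using i by (cases "k = i") (auto simp: lk_chm_i lk_chm_O lkB_O)
    then show ?thesis unfolding lep_def by (auto simp: not_le)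
  qed
  show "\<forall>j\<in>{1..N}. lep (chm c i j) A \<and> lep (chm c i (j - 1)) B \<and> A - chm c i j = B - chm c i (j - 1)"
  proof
    fix j assume j: "j \<in> {1..N}"
    then have N1: "N \<ge> 1" by auto
    obtain j' where j': "j = Suc j'" using j by (cases j) auto
    have jN: "j' * b k \<le> (N - 1) * b k" for k using j j' by (intro mult_le_mono1) auto
    have jbs: "j * b s \<le> a s + 1" using Nb j by (meson atLeastAtMost_iff le_trans mult_le_mono1)
    have bsp: "b s \<ge> 1" by (rule bs)
    have ptw: "lk (chm c i j) x \<le> lk A x \<and> lk (chm c i j') x \<le> lk B x \<and>
               lk A x - lk (chm c i j) x = lk B x - lk (chm c i j') x" for x
    proof (cases x rule: cases_x)
      case 1 then show ?thesis using jbs bsp j' by (simp add: lk_chm_s lkA_s lkB_s i; arith)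
    next
      case 2
      have bx: "b x \<ge> 1" using bO[OF 2] .
      have "(N - 1) * b x + (if x = i then c else 0) \<le> a x" using le[OF N1] 2 by blast
      then have lex: "j' * b x + (if x = i then c else 0) \<le> a x" using jN[of x] by linarith
      show ?thesis
      proof (cases "x = i")
        case True then show ?thesis using lex j' i by (simp add: lk_chm_i lkA_O lkB_O)
      next
        case False then show ?thesis using lex j' i 2 by (simp add: lk_chm_O lkA_O lkB_O)
      qed
    next
      case 3 then show ?thesis using lk_out[of x] lk_chm_out[OF i 3] by simp
    qed
    show "lep (chm c i j) A \<and> lep (chm c i (j - 1)) B \<and> A - chm c i j = B - chm c i (j - 1)"
      using ptw j' by (auto simp: lep_def poly_mapping_eq_iff fun_eq_iff lookup_minus)
  qed
qed

lemma box_zero_s: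
  assumes h: "h \<in> Ann n (Defs.mon A - Defs.mon B)" and supp: "\<forall>\<alpha>. lk h \<alpha> \<noteq> 0 \<longrightarrow> lep \<alpha> A"
  shows "h = 0"
proof (rule box_zero[OF h supp, of "\<lambda>\<alpha>. a s - lk \<alpha> s"], intro allI impI)
  fix \<alpha> assume 1: "lep \<alpha> A" and 2: "lep (A - \<alpha>) B" and 3: "lep (B - (A - \<alpha>)) A"
  have x1: "lk \<alpha> s \<le> a s" using 1 by (simp add: lep_def lkA_s[symmetric])
  have x3: "lk (B - (A - \<alpha>)) s \<le> a s" using 3 by (simp add: lep_def lkA_s[symmetric])
  have "lk (B - (A - \<alpha>)) s = lk \<alpha> s + b s" using x1 by (simp add: lookup_minus lkA_s lkB_s)
  then show "a s - lk (B - (A - \<alpha>)) s < a s - lk \<alpha> s" using x1 x3 bs by simp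
qed

end

lemma ideal_gen_0: "0 \<in> ideal_gen n gs"
  unfolding ideal_gen_def by (auto intro!: exI[of _ "\<lambda>_. 0"])

lemma ideal_gen_add: "f \<in> ideal_gen n (gs :: ('k::comm_ring_1) mpoly list) \<Longrightarrow> g \<in> ideal_gen n gs \<Longrightarrow> f + g \<in> ideal_gen n gs"
  unfolding ideal_gen_def
proof (clarify)
  fix h1 h2 :: "nat \<Rightarrow> 'k mpoly" assume "\<forall>i. in_vars n (h1 i)" "\<forall>i. in_vars n (h2 i)"
  then show "\<exists>h. (\<Sum>i<length gs. h1 i * gs ! i) + (\<Sum>i<length gs. h2 i * gs ! i) = (\<Sum>i<length gs. h i * gs ! i) \<and> (\<forall>i. in_vars n (h i))"
    by (intro exI[of _ "\<lambda>i. h1 i + h2 i"]) (simp add: in_vars_add distrib_right sum.distrib)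
qed

lemma ideal_gen_mult: "in_vars n H \<Longrightarrow> f \<in> ideal_gen n (gs :: ('k::comm_ring_1) mpoly list) \<Longrightarrow> H * f \<in> ideal_gen n gs"
  unfolding ideal_gen_def
proof (clarify)
  fix h1 :: "nat \<Rightarrow> 'k mpoly" assume "in_vars n H" "\<forall>i. in_vars n (h1 i)"
  then show "\<exists>h. H * (\<Sum>i<length gs. h1 i * gs ! i) = (\<Sum>i<length gs. h i * gs ! i) \<and> (\<forall>i. in_vars n (h i))"
    by (intro exI[of _ "\<lambda>i. H * h1 i"]) (simp add: in_vars_mult sum_distrib_left mult.assoc)
qed

lemma ideal_gen_uminus: "f \<in> ideal_gen n (gs :: ('k::comm_ring_1) mpoly list) \<Longrightarrow> - f \<in> ideal_gen n gs"
  using ideal_gen_mult[of n "-1" f gs] by (simp add: in_vars_uminus)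

lemma ideal_gen_diff: "f \<in> ideal_gen n (gs :: ('k::comm_ring_1) mpoly list) \<Longrightarrow> g \<in> ideal_gen n gs \<Longrightarrow> f - g \<in> ideal_gen n gs"
  using ideal_gen_add[OF _ ideal_gen_uminus] by (metis diff_conv_add_uminus)

lemma ideal_gen_member: 
  assumes "g \<in> set gs" shows "g \<in> ideal_gen n (gs :: ('k::comm_ring_1) mpoly list)"
proof -
  obtain i where i: "i < length gs" "g = gs ! i" using assms by (auto simp: in_set_conv_nth)
  have "(\<Sum>j<length gs. (if j = i then 1 else 0) * gs ! j) = (\<Sum>j<length gs. if j = i then gs ! j else 0)"
    by (rule sum.cong) auto
  then have "g = (\<Sum>j<length gs. (if j = i then 1 else 0) * gs ! j)"
    using i by (simp add: sum.delta)
  moreover have "\<forall>j. in_vars n (if j = i then 1 else 0 :: 'k mpoly)" by simp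
  ultimately have "\<exists>h. g = (\<Sum>j<length gs. h j * gs ! j) \<and> (\<forall>j. in_vars n (h j))"
    by (intro exI[of _ "\<lambda>j. if j = i then 1 else 0"]) simp
  then show ?thesis unfolding ideal_gen_def by simp
qed

lemma ideal_gen_sum: "(\<And>i. i \<in> I \<Longrightarrow> f i \<in> ideal_gen n (gs :: ('k::comm_ring_1) mpoly list)) \<Longrightarrow> (\<Sum>i\<in>I. f i) \<in> ideal_gen n gs"
  by (induction I rule: infinite_finite_induct) (auto intro: ideal_gen_add ideal_gen_0)

lemma mon_mult: "Defs.mon \<alpha> * Defs.mon \<beta> = (Defs.mon (\<alpha> + \<beta>) :: 'k::comm_ring_1 mpoly)"
  by (simp add: Defs.mon_def mult_single)

lemma expv_empty: "expv {} e = 0" by (simp add: expv_def)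
lemma expv_zero: "expv I (\<lambda>k. 0) = 0" by (simp add: expv_def)
lemma expv_insert: "finite I \<Longrightarrow> x \<notin> I \<Longrightarrow> expv (insert x I) e = Poly_Mapping.single x (e x) + expv I e"
  by (simp add: expv_def)
lemma expv_add: "expv I (\<lambda>k. e k + f k) = expv I e + expv I f"
  by (simp add: expv_def single_add sum.distrib)

lemma prod_xpow: "finite I \<Longrightarrow> (\<Prod>i\<in>I. xpow i (e i)) = (Defs.mon (expv I e) :: 'k::comm_ring_1 mpoly)"
proof (induction I rule: finite_induct)
  case empty then show ?case by (simp add: expv_empty Defs.mon_def)
next
  case (insert x F) then show ?case by (simp add: expv_insert xpow_def mon_mult)
qed

lemma mon_pow: "(Defs.mon (expv I e) :: 'k::comm_ring_1 mpoly) ^ j = Defs.mon (expv I (\<lambda>k. j * e k))"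
proof (induction j)
  case 0 then show ?case by (simp add: expv_zero Defs.mon_def)
next
  case (Suc j)
  have "expv I e + expv I (\<lambda>k. j * e k) = expv I (\<lambda>k. Suc j * e k)"
    by (simp add: expv_add[symmetric])
  then show ?case using Suc by (simp add: mon_mult)
qed

context sconf begin

lemma chm0: "chm 0 i 0 = Poly_Mapping.single s (a s + 1)"
  by (simp add: chm_def expv_zero)

lemma G_eq:
  assumes i0: "i0 \<in> Os"
  shows "(xpow s (a s + 1) + (\<Sum>j=1..N. (\<Prod>i\<in>Os. xpow i (b i)) ^ j * xpow s (a s + 1 - j * b s)) :: 'k::comm_ring_1 mpoly)
       = (\<Sum>j=0..N. Defs.mon (chm 0 i0 j))"
proof -
  have t: "(\<Prod>i\<in>Os. xpow i (b i)) ^ j * xpow s (a s + 1 - j * b s) = (Defs.mon (chm 0 i0 j) :: 'k mpoly)" for j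
    by (simp only: prod_xpow[OF finO] mon_pow) (simp add: xpow_def mon_mult chm_def)
  have "(\<Sum>j=0..N. Defs.mon (chm 0 i0 j) :: 'k mpoly) = Defs.mon (chm 0 i0 0) + (\<Sum>j=1..N. Defs.mon (chm 0 i0 j))"
    by (simp add: sum.atLeast_Suc_atMost)
  then show ?thesis by (simp only: t) (simp add: chm0 xpow_def)
qed

end

context sconf begin

definition red :: "('k::comm_ring_1) mpoly list \<Rightarrow> 'k mpoly \<Rightarrow> bool" where
  "red gs f \<longleftrightarrow> (\<exists>i\<in>ideal_gen n gs. \<forall>\<alpha>. lk (f - i) \<alpha> \<noteq> 0 \<longrightarrow> lep \<alpha> A)"

lemma red_add: "red gs f \<Longrightarrow> red gs g \<Longrightarrow> red gs (f + g)"
  unfolding red_def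
proof (elim bexE)
  fix i1 i2 assume i: "i1 \<in> ideal_gen n gs" "i2 \<in> ideal_gen n gs"
    and r: "\<forall>\<alpha>. lk (f - i1) \<alpha> \<noteq> 0 \<longrightarrow> lep \<alpha> A" "\<forall>\<alpha>. lk (g - i2) \<alpha> \<noteq> 0 \<longrightarrow> lep \<alpha> A"
  have e: "lk (f + g - (i1 + i2)) \<alpha> = lk (f - i1) \<alpha> + lk (g - i2) \<alpha>" for \<alpha>
    by (simp add: lookup_add lookup_minus algebra_simps)
  have "\<forall>\<alpha>. lk (f + g - (i1 + i2)) \<alpha> \<noteq> 0 \<longrightarrow> lep \<alpha> A"
  proof (intro allI impI)
    fix \<alpha> assume "lk (f + g - (i1 + i2)) \<alpha> \<noteq> 0"
    then have "lk (f - i1) \<alpha> \<noteq> 0 \<or> lk (g - i2) \<alpha> \<noteq> 0" unfolding e by auto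
    then show "lep \<alpha> A" using r by blast
  qed
  then show "\<exists>i\<in>ideal_gen n gs. \<forall>\<alpha>. lk (f + g - i) \<alpha> \<noteq> 0 \<longrightarrow> lep \<alpha> A"
    using ideal_gen_add[OF i] by blast
qed

lemma red_uminus: "red gs f \<Longrightarrow> red gs (- f)"
  unfolding red_def
proof (elim bexE)
  fix i1 assume i: "i1 \<in> ideal_gen n gs" and r: "\<forall>\<alpha>. lk (f - i1) \<alpha> \<noteq> 0 \<longrightarrow> lep \<alpha> A"
  have "- f - (- i1) = - (f - i1)" by simp
  then have "\<forall>\<alpha>. lk (- f - (- i1)) \<alpha> \<noteq> 0 \<longrightarrow> lep \<alpha> A" using r by (simp only: lookup_uminus) simp
  then show "\<exists>i\<in>ideal_gen n gs. \<forall>\<alpha>. lk (- f - i) \<alpha> \<noteq> 0 \<longrightarrow> lep \<alpha> A"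
    using ideal_gen_uminus[OF i] by blast
qed

lemma red_diff: "red gs f \<Longrightarrow> red gs g \<Longrightarrow> red gs (f - g)"
  using red_add[OF _ red_uminus] by (metis diff_conv_add_uminus)

lemma red_ideal: "f \<in> ideal_gen n gs \<Longrightarrow> red gs f"
  unfolding red_def by (intro bexI[of _ f]) auto

lemma red_0: "red gs 0" using red_ideal[OF ideal_gen_0] .

lemma red_sum: "(\<And>i. i \<in> I \<Longrightarrow> red gs (f i)) \<Longrightarrow> red gs (\<Sum>i\<in>I. f i)"
  by (induction I rule: infinite_finite_induct) (auto intro: red_add red_0)

lemma red_smult: "red gs f \<Longrightarrow> red gs (Poly_Mapping.single 0 c * f)"
  unfolding red_def
proof (elim bexE)
  fix i1 assume i: "i1 \<in> ideal_gen n gs" and r: "\<forall>\<alpha>. lk (f - i1) \<alpha> \<noteq> 0 \<longrightarrow> lep \<alpha> A"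
  have iv: "in_vars n (Poly_Mapping.single 0 c)" by (rule in_vars_single) simp
  have "Poly_Mapping.single 0 c * f - Poly_Mapping.single 0 c * i1 = Poly_Mapping.single 0 c * (f - i1)"
    by (simp add: algebra_simps)
  moreover have "lep 0 \<alpha>" for \<alpha> by (simp add: lep_def)
  ultimately have "\<forall>\<alpha>. lk (Poly_Mapping.single 0 c * f - Poly_Mapping.single 0 c * i1) \<alpha> \<noteq> 0 \<longrightarrow> lep \<alpha> A"
    using r by (simp add: lookup_single_mult) (metis mult_zero_right)
  then show "\<exists>i\<in>ideal_gen n gs. \<forall>\<alpha>. lk (Poly_Mapping.single 0 c * f - i) \<alpha> \<noteq> 0 \<longrightarrow> lep \<alpha> A"
    using ideal_gen_mult[OF iv i] by blast
qed

lemma red_mon: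
  fixes gs :: "('k::comm_ring_1) mpoly list"
  assumes gens: "\<forall>k\<in>Os. xpow k (a k + b k + 1) \<in> ideal_gen n gs"
    and Gin: "(\<Sum>j=0..N. Defs.mon (chm 0 i0 j)) \<in> ideal_gen n gs" and i0: "i0 \<in> Os"
  shows "Poly_Mapping.keys \<alpha> \<subseteq> {1..n} \<Longrightarrow> red gs (Defs.mon \<alpha>)"
proof (induction "lk \<alpha> s" arbitrary: \<alpha> rule: less_induct)
  case less
  show ?case
  proof (cases "lep \<alpha> A")
    case True
    then show ?thesis unfolding red_def
      by (intro bexI[of _ 0] ideal_gen_0) (auto simp: lookup_mon split: if_splits)
  next
    case False
    then obtain x where x: "lk \<alpha> x > lk A x" unfolding lep_def by (auto simp: not_le)
    have xin: "x \<in> {1..n}"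
    proof (rule ccontr)
      assume "x \<notin> {1..n}"
      then have "lk \<alpha> x = 0" using less.prems by (auto simp: in_keys_iff)
      then show False using x by simp
    qed
    show ?thesis
    proof (cases x rule: cases_x)
      case 3 then show ?thesis using xin by simp
    next
      case 2
      define e where "e = Poly_Mapping.single x (a x + b x + 1)"
      have ax: "lk \<alpha> x \<ge> a x + b x + 1" using x 2 by (simp add: lkA_O)
      have ae: "\<alpha> - e + e = \<alpha>" using ax
        by (auto simp: poly_mapping_eq_iff fun_eq_iff lookup_add lookup_minus e_def lookup_single when_def)
      have "xpow x (a x + b x + 1) = (Defs.mon e :: 'k mpoly)" by (simp add: xpow_def e_def)
      then have "Defs.mon \<alpha> = Defs.mon (\<alpha> - e) * (xpow x (a x + b x + 1) :: 'k mpoly)"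
        by (simp add: mon_mult ae)
      moreover have "in_vars n (Defs.mon (\<alpha> - e) :: 'k mpoly)"
      proof (rule in_vars_mon)
        have "Poly_Mapping.keys (\<alpha> - e) \<subseteq> Poly_Mapping.keys \<alpha>" by (auto simp: in_keys_iff lookup_minus)
        then show "Poly_Mapping.keys (\<alpha> - e) \<subseteq> {1..n}" using less.prems by blast
      qed
      ultimately have "Defs.mon \<alpha> \<in> ideal_gen n gs" using ideal_gen_mult gens 2 by metis
      then show ?thesis by (rule red_ideal)
    next
      case 1
      define e where "e = Poly_Mapping.single s (a s + 1)"
      define \<beta> where "\<beta> = \<alpha> - e"
      have ax: "lk \<alpha> s \<ge> a s + 1" using x 1 by (simp add: lkA_s)
      have ae: "\<beta> + e = \<alpha>" using ax
        by (auto simp: poly_mapping_eq_iff fun_eq_iff lookup_add lookup_minus \<beta>_def e_def lookup_single when_def)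
      have kb: "Poly_Mapping.keys \<beta> \<subseteq> {1..n}"
      proof -
        have "Poly_Mapping.keys \<beta> \<subseteq> Poly_Mapping.keys \<alpha>" by (auto simp: \<beta>_def in_keys_iff lookup_minus)
        then show ?thesis using less.prems by blast
      qed
      have "Defs.mon \<beta> * (\<Sum>j=0..N. Defs.mon (chm 0 i0 j)) = (\<Sum>j=0..N. Defs.mon (\<beta> + chm 0 i0 j) :: 'k mpoly)"
        by (simp add: sum_distrib_left mon_mult)
      also have "\<dots> = Defs.mon (\<beta> + chm 0 i0 0) + (\<Sum>j=1..N. Defs.mon (\<beta> + chm 0 i0 j))"
        by (simp add: sum.atLeast_Suc_atMost)
      also have "\<beta> + chm 0 i0 0 = \<alpha>" using ae by (simp add: chm0 e_def)
      finally have eq: "Defs.mon \<alpha> = Defs.mon \<beta> * (\<Sum>j=0..N. Defs.mon (chm 0 i0 j)) - (\<Sum>j=1..N. Defs.mon (\<beta> + chm 0 i0 j) :: 'k mpoly)"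
        by (simp add: algebra_simps)
      have r1: "red gs (Defs.mon \<beta> * (\<Sum>j=0..N. Defs.mon (chm 0 i0 j)))"
        by (rule red_ideal, rule ideal_gen_mult[OF in_vars_mon[OF kb] Gin])
      have r2: "red gs (\<Sum>j=1..N. Defs.mon (\<beta> + chm 0 i0 j) :: 'k mpoly)"
      proof (rule red_sum)
        fix j assume j: "j \<in> {1..N}"
        show "red gs (Defs.mon (\<beta> + chm 0 i0 j))"
        proof (rule less.hyps)
          have jb: "j * b s \<ge> 1" using j bs by (simp add: Suc_le_eq)
          have e1: "lk \<beta> s + (a s + 1) = lk \<alpha> s" using ae by (metis e_def lookup_add lookup_single_eq)
          have e2: "lk (\<beta> + chm 0 i0 j) s = lk \<beta> s + (a s + 1 - j * b s)"
            using i0 by (simp add: lookup_add lk_chm_s)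
          show "lk (\<beta> + chm 0 i0 j) s < lk \<alpha> s" using jb e1 e2 by arith
          show "Poly_Mapping.keys (\<beta> + chm 0 i0 j) \<subseteq> {1..n}"
            using kb keys_chm[OF i0] by (simp add: keys_plus_nat)
        qed
      qed
      show ?thesis unfolding eq by (rule red_diff[OF r1 r2])
    qed
  qed
qed

lemma red_all:
  fixes gs :: "('k::comm_ring_1) mpoly list"
  assumes gens: "\<forall>k\<in>Os. xpow k (a k + b k + 1) \<in> ideal_gen n gs"
    and Gin: "(\<Sum>j=0..N. Defs.mon (chm 0 i0 j)) \<in> ideal_gen n gs" and i0: "i0 \<in> Os"
    and f: "in_vars n f"
  shows "red gs f"
proof -
  have "f = (\<Sum>k\<in>Poly_Mapping.keys f. Poly_Mapping.single 0 (lk f k) * Defs.mon k)"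
    by (subst poly_sum_monomials) (simp add: Defs.mon_def mult_single)
  also have "red gs \<dots>"
    using f by (intro red_sum red_smult red_mon[OF gens Gin i0]) (auto simp: in_vars_def)
  finally show ?thesis .
qed

end

context sconf begin

lemma Os_ne: "Os \<noteq> {}"
proof -
  have "card Os = n - 1" using O_def sn by (simp add: card_Diff_singleton)
  then show ?thesis using n3 by auto
qed

lemma pure_in_Ann:
  assumes k: "k \<in> Os"
  shows "xpow k (a k + b k + 1) \<in> Ann n (Defs.mon A - Defs.mon B :: 'k::comm_ring_1 mpoly)"
  unfolding xpow_def
proof (rule mon_in_Ann)
  show "Poly_Mapping.keys (Poly_Mapping.single k (a k + b k + 1)) \<subseteq> {1..n}" using k O_sub by auto
  show "\<not> lep (Poly_Mapping.single k (a k + b k + 1)) A" unfolding lep_def using k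
    by (auto simp: lkA_O intro!: exI[of _ k])
  show "\<not> lep (Poly_Mapping.single k (a k + b k + 1)) B" unfolding lep_def using k
    by (auto simp: lkB_O intro!: exI[of _ k])
qed

lemma ci_main:
  fixes os :: "nat list"
  assumes cond: "\<exists>i\<in>Os. a i < ((a s + 1) div b s) * b i" and os: "set os = Os"
  shows "Ann n (Defs.mon A - Defs.mon B :: 'k::comm_ring_1 mpoly) =
    ideal_gen n (map (\<lambda>i. xpow i (a i + b i + 1)) os @
      [xpow s (a s + 1) + (\<Sum>j=1..Min {a i div b i | i. i \<in> Os} + 1.
          (\<Prod>i\<in>Os. xpow i (b i)) ^ j * xpow s (a s + 1 - j * b s))])"
    (is "?Ann = ideal_gen n ?gs")
proof -
  define M where "M = Min {a i div b i | i. i \<in> Os}"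
  define q where "q = (a s + 1) div b s"
  have setM: "{a i div b i | i. i \<in> Os} = (\<lambda>i. a i div b i) ` Os" by auto
  have finM: "finite {a i div b i | i. i \<in> Os}" using finO setM by simp
  have neM: "{a i div b i | i. i \<in> Os} \<noteq> {}" using Os_ne setM by simp
  obtain i0 where i0: "i0 \<in> Os" "M = a i0 div b i0"
    using Min_in[OF finM neM] unfolding M_def by auto
  have Mle: "M \<le> a k div b k" if "k \<in> Os" for k
    unfolding M_def using that finM by (intro Min_le) auto
  obtain i1 where i1: "i1 \<in> Os" "a i1 < q * b i1" using cond q_def by auto
  have "a i1 div b i1 < q" using i1 bO[OF i1(1)] by (simp add: div_less_iff_less_mult)
  then have Mq: "M + 1 \<le> q" using Mle[OF i1(1)] by simp
  define G :: "'k mpoly" where "G = (\<Sum>j=0..M+1. Defs.mon (chm 0 i0 j))"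
  have Geq: "xpow s (a s + 1) + (\<Sum>j=1..M + 1. (\<Prod>i\<in>Os. xpow i (b i)) ^ j * xpow s (a s + 1 - j * b s)) = G"
    unfolding G_def by (rule G_eq[OF i0(1)])
  have GA: "G \<in> ?Ann" unfolding G_def
  proof (rule chain_in_Ann[OF i0(1)])
    have "q * b s \<le> a s + 1" unfolding q_def by (rule div_times_less_eq_dividend)
    then show "(M + 1) * b s \<le> a s + 1" using Mq by (meson le_trans mult_le_mono1)
    show "M + 1 \<ge> 1 \<Longrightarrow> \<forall>k\<in>Os. (M + 1 - 1) * b k + (if k = i0 then 0 else 0) \<le> a k"
    proof (intro ballI)
      fix k assume k: "k \<in> Os"
      have "M * b k \<le> (a k div b k) * b k" using Mle[OF k] by (rule mult_le_mono1)
      also have "\<dots> \<le> a k" by (rule div_times_less_eq_dividend)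
      finally show "(M + 1 - 1) * b k + (if k = i0 then 0 else 0) \<le> a k" by simp
    qed
    have "a i0 < b i0 + (a i0 div b i0) * b i0" using bO[OF i0(1)]
      by (intro dividend_less_div_times) simp
    then have "a i0 < (a i0 div b i0 + 1) * b i0" by (simp add: algebra_simps)
    then show "\<exists>k\<in>Os. a k < (M + 1) * b k + (if k = i0 then 0 else 0)" using i0 by auto
  qed
  have gsA: "\<forall>g\<in>set ?gs. g \<in> ?Ann"
  proof
    fix g assume "g \<in> set ?gs"
    then have "g \<in> (\<lambda>i. xpow i (a i + b i + 1)) ` set os \<or> g = xpow s (a s + 1) + (\<Sum>j=1..M + 1. (\<Prod>i\<in>Os. xpow i (b i)) ^ j * xpow s (a s + 1 - j * b s))"
      unfolding M_def by (simp only: set_append set_map list.set Un_iff singleton_iff insert_iff empty_iff) simp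
    then have "g \<in> (\<lambda>i. xpow i (a i + b i + 1)) ` Os \<or> g = G"
      by (simp only: os Geq)
    then show "g \<in> ?Ann" using GA pure_in_Ann by blast
  qed
  have sub: "ideal_gen n ?gs \<subseteq> ?Ann" by (rule ideal_gen_sub_Ann[OF gsA])
  have gens: "\<forall>k\<in>Os. xpow k (a k + b k + 1) \<in> ideal_gen n ?gs"
    using os by (auto intro!: ideal_gen_member)
  have Gin: "G \<in> ideal_gen n ?gs" 
    by (rule ideal_gen_member) (simp add: Geq[symmetric] M_def)
  show ?thesis
  proof
    show "?Ann \<subseteq> ideal_gen n ?gs"
    proof
      fix f assume f: "f \<in> ?Ann"
      then have "in_vars n f" by (simp add: Ann_iff)
      then have "red ?gs f" using red_all[OF gens Gin[unfolded G_def] i0(1)] by blast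
      then obtain i where i: "i \<in> ideal_gen n ?gs" and r: "\<forall>\<alpha>. lk (f - i) \<alpha> \<noteq> 0 \<longrightarrow> lep \<alpha> A"
        unfolding red_def by blast
      have "f - i \<in> ?Ann" using Ann_diff[OF f] sub i by blast
      then have "f - i = 0" using box_zero_s r by blast
      then show "f \<in> ideal_gen n ?gs" using i by simp
    qed
  qed (rule sub)
qed

end

locale sconf_nc = sconf +
  assumes ncond: "\<forall>i\<in>Os. ((a s + 1) div b s) * b i \<le> a i"
begin

definition q where "q = (a s + 1) div b s"
definition ee where "ee = a s + 1 - q * b s"
definition cc where "cc i = a i - q * b i + 1"
definition oo :: "nat \<Rightarrow> nat" where "oo k = (if k + 1 < s then k + 1 else k + 2)"
definition i1 where "i1 = oo 0"
definition i2 where "i2 = oo 1"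
definition oth where "oth i = (if i = i1 then i2 else i1)"
definition PP where "PP i = chm (cc i) i q"

lemma qle: "i \<in> Os \<Longrightarrow> q * b i \<le> a i" using ncond q_def by auto
lemma qbs: "q * b s \<le> a s + 1" unfolding q_def by (rule div_times_less_eq_dividend)
lemma ee_lt: "ee < b s"
proof -
  have "ee = (a s + 1) mod b s" unfolding ee_def q_def by (simp add: minus_div_mult_eq_mod)
  then show ?thesis using bs by simp
qed
lemma ee_q: "ee + q * b s = a s + 1" using qbs unfolding ee_def by simp

lemma oo_in: "k < n - 1 \<Longrightarrow> oo k \<in> Os"
  unfolding oo_def O_def using sn by auto
lemma oo_inj: "k < n - 1 \<Longrightarrow> l < n - 1 \<Longrightarrow> oo k = oo l \<Longrightarrow> k = l"
  unfolding oo_def by (auto split: if_splits)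
lemma i12: "i1 \<in> Os" "i2 \<in> Os" "i1 \<noteq> i2"
proof -
  have h: "0 < n - 1" "1 < n - 1" using n3 by auto
  show "i1 \<in> Os" "i2 \<in> Os" "i1 \<noteq> i2"
    using oo_in[OF h(1)] oo_in[OF h(2)] oo_inj[OF h] unfolding i1_def i2_def by auto
qed
lemma oth: "i \<in> Os \<Longrightarrow> oth i \<in> Os \<and> oth i \<noteq> i"
  using i12 unfolding oth_def by auto
lemma other_ex: "x \<in> Os \<Longrightarrow> \<exists>y\<in>Os. y \<noteq> x"
  using oth by blast

lemma cc_q: "i \<in> Os \<Longrightarrow> cc i + q * b i = a i + 1" using qle unfolding cc_def by fastforce
lemma cc_pos: "cc i \<ge> 1" unfolding cc_def by simp

lemma lkP: "i \<in> Os \<Longrightarrow> lk (PP i) t =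
  (if t = i then a i + 1 else if t \<in> Os then q * b t else if t = s then ee else 0)"
  unfolding PP_def using sO cc_q by (auto simp: lk_chm ee_def)

lemma single_ne_chm:
  assumes i: "i \<in> Os" and j: "j \<le> q"
  shows "Poly_Mapping.single x v \<noteq> chm (cc i) i j"
proof
  assume eq: "Poly_Mapping.single x v = chm (cc i) i j"
  have t1: "lk (chm (cc i) i j) i \<noteq> 0" using i cc_pos[of i] by (simp add: lk_chm_i Suc_le_eq)
  obtain t where t: "t \<noteq> i" "lk (chm (cc i) i j) t \<noteq> 0"
  proof (cases "j = 0")
    case True then show ?thesis using that[of s] i sO by (auto simp: lk_chm_s)
  next
    case False
    have "oth i \<in> Os" "oth i \<noteq> i" using oth[OF i] by auto
    then show ?thesis using that[of "oth i"] i False bO[of "oth i"] by (auto simp: lk_chm_O)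
  qed
  have "x = i" using t1 eq by (metis lookup_single_not_eq)
  moreover have "x = t" using t(2) eq by (metis lookup_single_not_eq)
  ultimately show False using t(1) by simp
qed

lemma chm_inj: "i \<in> Os \<Longrightarrow> inj_on (chm c i) J"
proof (rule inj_onI)
  fix j j' assume i: "i \<in> Os" and "chm c i j = chm c i j'"
  then have "lk (chm c i j) i = lk (chm c i j') i" by simp
  then have "j * b i = j' * b i" using i by (simp add: lk_chm_i)
  then show "j = j'" using bO[OF i] by simp
qed

lemma P_notin_other:
  assumes i: "i \<in> Os" and i': "i' \<in> Os" "i' \<noteq> i"
  shows "PP i' \<notin> chm (cc i) i ` {0..q}"
proof
  assume "PP i' \<in> chm (cc i) i ` {0..q}"
  then obtain j where j: "j \<le> q" "PP i' = chm (cc i) i j" by auto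
  then have "lk (PP i') i' = lk (chm (cc i) i j) i'" by simp
  moreover have "lk (PP i') i' = a i' + 1" using i' by (simp add: lkP)
  moreover have "lk (chm (cc i) i j) i' = j * b i'" using i i' by (simp add: lk_chm_O)
  moreover have "j * b i' \<le> q * b i'" using j by (simp add: mult_le_mono1)
  ultimately show False using qle[OF i'(1)] by simp
qed

lemma P_in: "i \<in> Os \<Longrightarrow> PP i \<in> chm (cc i) i ` {0..q}"
  unfolding PP_def by auto

definition gw :: "nat \<Rightarrow> 'k::comm_ring_1 mpoly" where
  "gw i = (\<Sum>j=0..q. Defs.mon (chm (cc i) i j))"

lemma lk_gw: "i \<in> Os \<Longrightarrow> lk (gw i :: 'k::comm_ring_1 mpoly) \<mu> = (if \<mu> \<in> chm (cc i) i ` {0..q} then 1 else 0)"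
  unfolding gw_def by (rule lookup_sum_mon_inj[OF chm_inj]) auto

lemma gw_Ann: "i \<in> Os \<Longrightarrow> gw i \<in> Ann n (Defs.mon A - Defs.mon B :: 'k::comm_ring_1 mpoly)"
  unfolding gw_def
proof (rule chain_in_Ann)
  assume i: "i \<in> Os"
  show "q * b s \<le> a s + 1" by (rule qbs)
  show "\<forall>k\<in>Os. (q - 1) * b k + (if k = i then cc i else 0) \<le> a k" if q1: "q \<ge> 1"
  proof
    fix k assume k: "k \<in> Os"
    have e1: "(q - 1) * b k + b k = q * b k" using q1 by (cases q) auto
    show "(q - 1) * b k + (if k = i then cc i else 0) \<le> a k"
      using e1 qle[OF k] cc_q[OF i] bO[OF k] by (cases "k = i") auto
  qed
  show "\<exists>k\<in>Os. a k < q * b k + (if k = i then cc i else 0)"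
    using i cc_q[OF i] by (intro bexI[of _ i]) auto
qed

end

context sconf_nc begin

lemma wit_pure:
  assumes x: "x \<in> Os" and h: "h \<in> Ann n (Defs.mon A - Defs.mon B)"
  shows "\<forall>j. 1 \<le> lk (Poly_Mapping.single x (a x + b x + 1)) j \<longrightarrow>
             lk h (Poly_Mapping.single x (a x + b x + 1) - Poly_Mapping.single j 1) = 0"
proof (intro allI impI)
  fix j assume j: "1 \<le> lk (Poly_Mapping.single x (a x + b x + 1)) j"
  then have jx: "j = x" by (auto simp: lookup_single when_def split: if_splits)
  define \<mu> where "\<mu> = Poly_Mapping.single x (a x + b x + 1) - Poly_Mapping.single j 1"
  have lm: "lk \<mu> t = (if t = x then a x + b x else 0)" for t
    by (simp add: \<mu>_def lookup_minus lookup_single when_def jx)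
  have "lk h \<mu> = 0"
  proof (rule chainA[OF h, of _ 0])
    show "lep \<mu> A" unfolding lep_def using x by (simp add: lm lkA_O)
    show "lk \<mu> s + 0 * b s \<le> a s" using x sO by (auto simp: lm)
    obtain y where y: "y \<in> Os" "y \<noteq> x" using other_ex[OF x] by blast
    then show "\<exists>k\<in>Os. lk \<mu> k < (0 + 1) * b k" using bO[OF y(1)] by (intro bexI[of _ y]) (auto simp: lm)
  qed
  then show "lk h (Poly_Mapping.single x (a x + b x + 1) - Poly_Mapping.single j 1) = 0"
    by (simp add: \<mu>_def)
qed

lemma wit_P:
  assumes i: "i \<in> Os" and h: "h \<in> Ann n (Defs.mon A - Defs.mon B)"
  shows "\<forall>j. 1 \<le> lk (PP i) j \<longrightarrow> lk h (PP i - Poly_Mapping.single j 1) = 0"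
proof (intro allI impI)
  fix j assume j: "1 \<le> lk (PP i) j"
  define \<mu> where "\<mu> = PP i - Poly_Mapping.single j 1"
  have lm: "lk \<mu> t = lk (PP i) t - (if t = j then 1 else 0)" for t
    by (simp add: \<mu>_def lookup_minus lookup_single when_def; arith?)
  have bsp: "b s \<ge> 1" by (rule bs)
  have si[simp]: "s \<noteq> i" "i \<noteq> s" using i sO by auto
  have "lk h \<mu> = 0"
  proof (cases j rule: cases_x)
    case 3 then show ?thesis using j i O_sub sn by (auto simp: lkP split: if_splits; arith?)
  next
    case 1
    then have e1: "ee \<ge> 1" using j i sO 1 by (simp add: lkP; arith?)
    show ?thesis
    proof (rule chainA[OF h, of _ q])
      show "lep \<mu> A" unfolding lep_def
      proof
        fix t show "lk \<mu> t \<le> lk A t"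
        proof (cases t rule: cases_x)
          case 1 then show ?thesis using \<open>j = s\<close> si i sO ee_q by (simp add: lm lkP lkA_s; arith?)
        next
          case 2 then show ?thesis using \<open>j = s\<close> si i sO qle[OF 2] bO[OF 2] by (auto simp: lm lkP lkA_O; arith?)
        next
          case 3 then show ?thesis using \<open>j = s\<close> i O_sub sn by (auto simp: lm lkP lk_out; arith?)
        qed
      qed
      show "lk \<mu> s + q * b s \<le> a s" using \<open>j = s\<close> si i sO ee_q e1 by (simp add: lm lkP; arith?)
      have y: "oth i \<in> Os" "oth i \<noteq> i" using oth[OF i] by auto
      have "q * b (oth i) < (q + 1) * b (oth i)" using bO[OF y(1)] by simp
      then show "\<exists>k\<in>Os. lk \<mu> k < (q + 1) * b k" using y \<open>j = s\<close> sO i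
        by (intro bexI[of _ "oth i"]) (auto simp: lm lkP)
    qed
  next
    case 2
    show ?thesis
    proof (cases "j = i")
      case True
      show ?thesis
      proof (rule chainB0[OF h])
        show "lep \<mu> B" unfolding lep_def
        proof
          fix t show "lk \<mu> t \<le> lk B t"
          proof (cases t rule: cases_x)
            case 1 then show ?thesis using True i sO ee_lt by (simp add: lm lkP lkB_s; arith?)
          next
            case 2 then show ?thesis using True i sO qle[OF 2] by (auto simp: lm lkP lkB_O; arith?)
          next
            case 3 then show ?thesis using True i O_sub sn by (auto simp: lm lkP lk_out; arith?)
          qed
        qed
        show "lk \<mu> s < b s" using True i sO ee_lt by (simp add: lm lkP; arith?)
      qed
    next
      case False
      have qj: "lk (PP i) j = q * b j" using 2 False i by (simp add: lkP; arith?)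
      then have q1: "q \<ge> 1" using j by (cases q) auto
      have e2: "(q - 1) * b s + b s = q * b s" using q1 by (cases q) auto
      have qbs1: "q * b s \<ge> 1" using q1 bsp by (simp add: Suc_le_eq; arith?)
      show ?thesis
      proof (rule chainA[OF h, of _ "q - 1"])
        show "lep \<mu> A" unfolding lep_def
        proof
          fix t show "lk \<mu> t \<le> lk A t"
          proof (cases t rule: cases_x)
            case 1
            have js: "j \<noteq> s" using 2 sO by auto
            have m: "lk \<mu> t = ee" using 1 js i sO by (simp add: lm lkP)
            have at: "lk A t = a s" using 1 by (simp add: lkA_s)
            show ?thesis unfolding m at using ee_q qbs1 by linarith
          next
            case t2: 2
            have "q * b t \<le> a t + b t" using qle[OF t2] by simp
            then show ?thesis using t2 i bO[OF t2] by (auto simp: lm lkP lkA_O; arith?)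
          next
            case 3 then show ?thesis using False 2 i O_sub sn by (auto simp: lm lkP lk_out; arith?)
          qed
        qed
        show "lk \<mu> s + (q - 1) * b s \<le> a s"
          using False 2 i sO ee_q e2 bsp by (simp add: lm lkP; arith?)
        have "q * b j - 1 < (q - 1 + 1) * b j" using q1 j qj by simp
        then show "\<exists>k\<in>Os. lk \<mu> k < (q - 1 + 1) * b k" using 2 False i
          by (intro bexI[of _ j]) (auto simp: lm lkP)
      qed
    qed
  qed
  then show "lk h (PP i - Poly_Mapping.single j 1) = 0" by (simp add: \<mu>_def; arith?)
qed

lemma single_eq_key: "Poly_Mapping.single x v = Poly_Mapping.single y w \<Longrightarrow> v \<noteq> 0 \<Longrightarrow> x = y"
  by (metis lookup_single_eq lookup_single_not_eq)

lemma nonci: "\<not> is_CI n (Defs.mon A - Defs.mon B :: 'k::field mpoly)"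
proof -
  define p where "p k = (if k < n - 1 then Poly_Mapping.single (oo k) (a (oo k) + b (oo k) + 1)
      else if k = n - 1 then PP i1 else PP i2)" for k
  define w :: "nat \<Rightarrow> 'k mpoly" where "w k = (if k < n - 1 then Defs.mon (p k)
      else if k = n - 1 then gw i1 else gw i2)" for k
  have n1: "n - 1 < n" using n3 by simp
  have pne: "p l \<noteq> p k" if "k < n - 1" "\<not> l < n - 1" "l < Suc n" for k l
  proof -
    have pk: "p k = Poly_Mapping.single (oo k) (a (oo k) + b (oo k) + 1)" using that(1) by (simp add: p_def)
    have "p l = PP i1 \<or> p l = PP i2" using that(2) unfolding p_def by auto
    moreover have "PP i1 \<noteq> p k" "PP i2 \<noteq> p k"
      using single_ne_chm[OF i12(1), of q] single_ne_chm[OF i12(2), of q] unfolding pk PP_def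
      by (metis le_refl)+
    ultimately show ?thesis by auto
  qed
  show ?thesis
  proof (rule witness_noCI[where w = w and p = p])
    show "\<forall>k<Suc n. w k \<in> Ann n (Defs.mon A - Defs.mon B)"
      using pure_in_Ann oo_in gw_Ann i12 unfolding w_def p_def xpow_def by auto
    show "\<forall>k<Suc n. \<forall>l<Suc n. lk (w k) (p l) = (if k = l then 1 else 0)"
    proof (intro allI impI)
      fix k l assume k: "k < Suc n" and l: "l < Suc n"
      consider (a) "k < n - 1" | (b) "k = n - 1" | (c) "k = n" using k by linarith
      then show "lk (w k) (p l) = (if k = l then 1 else 0)"
      proof cases
        case a
        have "p l = p k \<longleftrightarrow> k = l"
        proof
          assume e: "p l = p k"
          show "k = l"
          proof (cases "l < n - 1")
            case True
            then have "oo l = oo k" using e a unfolding p_def by (auto dest: single_eq_key)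
            then show ?thesis using oo_inj[OF a True] by simp
          next
            case False then show ?thesis using pne[OF a False l] e by simp
          qed
        qed simp
        then show ?thesis using a by (simp add: w_def lookup_mon)
      next
        case b
        have "p l \<in> chm (cc i1) i1 ` {0..q} \<longleftrightarrow> k = l"
        proof (cases "l < n - 1")
          case True
          then show ?thesis using b single_ne_chm[OF i12(1)] unfolding p_def by auto
        next
          case False
          then have "l = n - 1 \<or> l = n" using l by linarith
          then show ?thesis using b n1 P_in[OF i12(1)] P_notin_other[OF i12(1) i12(2)] i12(3)
            unfolding p_def by auto
        qed
        then show ?thesis using b n1 i12 by (simp add: w_def lk_gw)
      next
        case c
        have "p l \<in> chm (cc i2) i2 ` {0..q} \<longleftrightarrow> k = l"
        proof (cases "l < n - 1")
          case True
          then show ?thesis using c n1 single_ne_chm[OF i12(2)] unfolding p_def by auto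
        next
          case False
          then have "l = n - 1 \<or> l = n" using l by linarith
          then show ?thesis using c n1 P_in[OF i12(2)] P_notin_other[OF i12(2) i12(1)] i12(3)
            unfolding p_def by auto
        qed
        then show ?thesis using c n1 i12 by (simp add: w_def lk_gw)
      qed
    qed
    show "\<forall>k<Suc n. \<forall>h\<in>Ann n (Defs.mon A - Defs.mon B). \<forall>j. 1 \<le> lk (p k) j \<longrightarrow> lk h (p k - Poly_Mapping.single j 1) = 0"
    proof (intro allI impI ballI)
      fix k h j assume k: "k < Suc n" and h: "h \<in> Ann n (Defs.mon A - Defs.mon B)" and j: "1 \<le> lk (p k) j"
      consider (a) "k < n - 1" | (b) "k = n - 1" | (c) "k = n" using k by linarith
      then show "lk h (p k - Poly_Mapping.single j 1) = 0"
      proof cases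
        case a then show ?thesis using wit_pure[OF oo_in[OF a] h] j unfolding p_def by simp
      next
        case b then show ?thesis using wit_P[OF i12(1) h] j n1 unfolding p_def by simp
      next
        case c then show ?thesis using wit_P[OF i12(2) h] j n1 unfolding p_def by simp
      qed
    qed
  qed
qed

end

lemma single_eq_key0: "Poly_Mapping.single x v = Poly_Mapping.single y w \<Longrightarrow> v \<noteq> 0 \<Longrightarrow> x = y"
  by (metis lookup_single_eq lookup_single_not_eq)

lemma nonci_mid:
  fixes a b :: "nat \<Rightarrow> nat" and n r :: nat
  assumes r2: "2 \<le> r" and rn: "r \<le> n - 2" and n3: "n \<ge> 3"
    and bpos: "\<forall>i\<in>{1..n}. b i \<ge> 1"
  shows "\<not> is_CI n (binomF n r a b :: 'k::field mpoly)"
proof -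
  define A where "A = expv {1..n} a + expv {1..r} b"
  define B where "B = expv {1..n} a + expv {r+1..n} b"
  have F: "binomF n r a b = (Defs.mon A - Defs.mon B :: 'k mpoly)" by (simp add: binomF_def A_def B_def)
  have n4: "n \<ge> 4" using r2 rn by linarith
  have lkA: "lk A x = (if x \<in> {1..n} then a x else 0) + (if x \<in> {1..r} then b x else 0)" for x
    by (simp add: A_def lookup_add lookup_expv)
  have lkB: "lk B x = (if x \<in> {1..n} then a x else 0) + (if x \<in> {r+1..n} then b x else 0)" for x
    by (simp add: B_def lookup_add lookup_expv)
  define p where "p k = (if k < n then Poly_Mapping.single (k+1) (a (k+1) + b (k+1) + 1)
     else Poly_Mapping.single 1 (a 1 + 1) + Poly_Mapping.single n (a n + 1))" for k
  define w :: "nat \<Rightarrow> 'k mpoly" where "w k = Defs.mon (p k)" for k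
  have lpn: "lk (p n) x = (if x = 1 then a 1 + 1 else if x = n then a n + 1 else 0)" for x
    using n3 by (simp add: p_def lookup_add lookup_single when_def)
  have pinj: "p k = p l \<longleftrightarrow> k = l" if "k < Suc n" "l < Suc n" for k l
  proof
    assume e: "p k = p l"
    show "k = l"
    proof (cases "k < n"; cases "l < n")
      assume "k < n" "l < n"
      then show "k = l" using e unfolding p_def by (auto dest: single_eq_key0)
    next
      assume k: "k < n" and l: "\<not> l < n"
      have ln: "l = n" using l that(2) by simp
      have "lk (p l) 1 \<noteq> 0" "lk (p l) n \<noteq> 0" using ln n3 by (auto simp: lpn)
      moreover have "lk (p k) x \<noteq> 0 \<Longrightarrow> x = k + 1" for x using k by (simp add: p_def lookup_single when_def split: if_splits)
      ultimately show "k = l" using e n3 by (metis numeral_le_one_iff semiring_norm(70) le_numeral_extra(4) nat_le_linear)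
    next
      assume l: "l < n" and k: "\<not> k < n"
      have kn: "k = n" using k that(1) by simp
      have "lk (p k) 1 \<noteq> 0" "lk (p k) n \<noteq> 0" using kn n3 by (auto simp: lpn)
      moreover have "lk (p l) x \<noteq> 0 \<Longrightarrow> x = l + 1" for x using l by (simp add: p_def lookup_single when_def split: if_splits)
      ultimately show "k = l" using e n3 by (metis numeral_le_one_iff semiring_norm(70) le_numeral_extra(4) nat_le_linear)
    next
      assume "\<not> k < n" "\<not> l < n" then show "k = l" using that by simp
    qed
  qed simp
  show ?thesis unfolding F
  proof (rule witness_noCI[where w = w and p = p])
    show "\<forall>k<Suc n. w k \<in> Ann n (Defs.mon A - Defs.mon B)"
    proof (intro allI impI)
      fix k assume k: "k < Suc n"
      show "w k \<in> Ann n (Defs.mon A - Defs.mon B)" unfolding w_def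
      proof (rule mon_in_Ann)
        show "Poly_Mapping.keys (p k) \<subseteq> {1..n}"
        proof
          fix x assume "x \<in> Poly_Mapping.keys (p k)"
          then have "lk (p k) x \<noteq> 0" by (simp add: in_keys_iff)
          then show "x \<in> {1..n}" using k n3
            by (cases "k < n") (auto simp: p_def lookup_add lookup_single when_def split: if_splits)
        qed
        show "\<not> lep (p k) A"
        proof (cases "k < n")
          case True then show ?thesis unfolding lep_def
            by (auto simp: p_def lkA intro!: exI[of _ "k+1"])
        next
          case False then have kn: "k = n" using k by simp
          then show ?thesis unfolding lep_def using n3 rn
            by (auto simp: lpn lkA intro!: exI[of _ n])
        qed
        show "\<not> lep (p k) B"
        proof (cases "k < n")
          case True then show ?thesis unfolding lep_def
            by (auto simp: p_def lkB intro!: exI[of _ "k+1"])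
        next
          case False then have kn: "k = n" using k by simp
          then show ?thesis unfolding lep_def using n3 r2
            by (auto simp: lpn lkB intro!: exI[of _ 1])
        qed
      qed
    qed
    show "\<forall>k<Suc n. \<forall>l<Suc n. lk (w k) (p l) = (if k = l then 1 else 0)"
      using pinj by (auto simp: w_def lookup_mon)
    show "\<forall>k<Suc n. \<forall>h\<in>Ann n (Defs.mon A - Defs.mon B). \<forall>j. 1 \<le> lk (p k) j \<longrightarrow> lk h (p k - Poly_Mapping.single j 1) = 0"
    proof (intro allI impI ballI)
      fix k h j assume k: "k < Suc n" and h: "h \<in> Ann n (Defs.mon A - Defs.mon B)" and j: "1 \<le> lk (p k) j"
      define \<mu> where "\<mu> = p k - Poly_Mapping.single j 1"
      have lm: "lk \<mu> t = lk (p k) t - (if t = j then 1 else 0)" for t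
        by (simp add: \<mu>_def lookup_minus lookup_single when_def)
      have "lk h \<mu> = 0"
      proof (cases "k < n")
        case True
        define x where "x = k + 1"
        have jx: "j = x" using j True by (auto simp: p_def x_def lookup_single when_def split: if_splits)
        have lmx: "lk \<mu> t = (if t = x then a x + b x else 0)" for t
          using True by (simp add: lm p_def x_def jx lookup_single when_def)
        have x1: "x \<in> {1..n}" using True x_def by auto
        show ?thesis
        proof (cases "x \<le> r")
          case True
          show ?thesis
          proof (rule zeroA[OF h])
            show "lep \<mu> A" unfolding lep_def using True x1 by (auto simp: lmx lkA)
            define y :: nat where "y = (if x = 1 then 2 else 1)"
            have y: "y \<in> {1..r}" "y \<noteq> x" using r2 by (auto simp: y_def)
            have by1: "b y \<ge> 1" using bpos y rn by auto
            show "\<not> lep (A - \<mu>) B" unfolding lep_def using y rn by1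
              by (auto simp: lookup_minus lmx lkA lkB intro!: exI[of _ y])
          qed
        next
          case False
          show ?thesis
          proof (rule zeroB[OF h])
            show "lep \<mu> B" unfolding lep_def using False x1 by (auto simp: lmx lkB)
            define y :: nat where "y = (if x = n then n - 1 else n)"
            have y: "y \<in> {r+1..n}" "y \<noteq> x" using rn n3 False by (auto simp: y_def)
            have by1: "b y \<ge> 1" using bpos y rn by auto
            show "\<not> lep (B - \<mu>) A" unfolding lep_def using y rn by1
              by (auto simp: lookup_minus lmx lkA lkB intro!: exI[of _ y])
          qed
        qed
      next
        case False
        then have kn: "k = n" using k by simp
        have j1n: "j = 1 \<or> j = n" using j kn by (auto simp: lpn split: if_splits)
        show ?thesis
        proof (cases "j = 1")
          case True
          have lmx: "lk \<mu> t = (if t = 1 then a 1 else if t = n then a n + 1 else 0)" for t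
            using True kn n3 by (simp add: lm lpn)
          show ?thesis
          proof (rule zeroB[OF h])
            show "lep \<mu> B" unfolding lep_def using n3 r2 rn bpos by (auto simp: lmx lkB)
            have y: "n - 1 \<in> {r+1..n}" "n - 1 \<noteq> 1" "n - 1 \<noteq> n" using rn n3 r2 by auto
            have by1: "b (n - 1) \<ge> 1" using bpos y rn by auto
            show "\<not> lep (B - \<mu>) A" unfolding lep_def using y rn by1
              by (auto simp: lookup_minus lmx lkA lkB intro!: exI[of _ "n - 1"])
          qed
        next
          case False
          then have jn: "j = n" using j1n by simp
          have lmx: "lk \<mu> t = (if t = 1 then a 1 + 1 else if t = n then a n else 0)" for t
            using jn kn n3 by (simp add: lm lpn)
          show ?thesis
          proof (rule zeroA[OF h])
            show "lep \<mu> A" unfolding lep_def using n3 r2 rn bpos by (auto simp: lmx lkA)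
            have y: "2 \<in> {1..r}" "(2::nat) \<noteq> 1" "2 \<noteq> n" using rn n3 r2 by auto
            have by1: "b 2 \<ge> 1" using bpos y rn by auto
            show "\<not> lep (A - \<mu>) B" unfolding lep_def using y rn by1
              by (auto simp: lookup_minus lmx lkA lkB intro!: exI[of _ 2])
          qed
        qed
      qed
      then show "lk h (p k - Poly_Mapping.single j 1) = 0" by (simp add: \<mu>_def)
    qed
  qed
qed

lemma is_CI_of_eq:
  assumes "Ann n F = ideal_gen n gs" "length gs = n"
  shows "is_CI n (F :: 'k::comm_ring_1 mpoly)"
  unfolding is_CI_def
proof (intro exI conjI ballI)
  fix g assume "g \<in> set gs"
  then have "g \<in> Ann n F" using assms(1) ideal_gen_member by blast
  then show "in_vars n g" by (simp add: Ann_iff)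
qed (use assms in auto)

lemma is_CI_swap: "is_CI n (Defs.mon B - Defs.mon A :: 'k::comm_ring_1 mpoly) = is_CI n (Defs.mon A - Defs.mon B :: 'k mpoly)"
  by (simp only: is_CI_def Ann_swap[of n A B])

theorem theorem3p3:
  fixes a b :: "nat \<Rightarrow> nat" and n r :: nat
  assumes K: "alg_closed TYPE('k::field_char_0)"
    and n3: "n \<ge> 3"
    and r: "1 \<le> r" "r \<le> n - 1"
    and b1: "\<forall>i\<in>{1..n}. b i \<ge> 1"
    and bal: "(\<Sum>i=1..r. b i) = (\<Sum>j=r+1..n. b j)" "(\<Sum>i=1..r. b i) > 0"
  shows "(is_CI n (binomF n r a b :: 'k mpoly) \<longleftrightarrow>
           ((r = n - 1 \<and> (\<exists>i\<in>{1..n-1}. a i < ((a n + 1) div b n) * b i)) \<or>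
            (r = 1 \<and> (\<exists>i\<in>{2..n}. a i < ((a 1 + 1) div b 1) * b i))))
       \<and> (r = n - 1 \<and> (\<exists>i\<in>{1..n-1}. a i < ((a n + 1) div b n) * b i) \<longrightarrow>
         Ann n (binomF n r a b :: 'k mpoly) =
           ideal_gen n
             (map (\<lambda>i. xpow i (a i + b i + 1)) [1..<n] @
              [xpow n (a n + 1) +
               (\<Sum>j=1..Min {a i div b i | i. i \<in> {1..n-1}} + 1.
                  (\<Prod>i=1..n-1. xpow i (b i)) ^ j * xpow n (a n + 1 - j * b n))]))"
proof -
  interpret Sn: sconf n n "{1..n-1}" a b
    using n3 b1 by unfold_locales auto
  interpret S1: sconf n 1 "{2..n}" a b
    using n3 b1 by unfold_locales auto
  have FSn: "r = n - 1 \<Longrightarrow> binomF n r a b = (Defs.mon Sn.A - Defs.mon Sn.B :: 'k mpoly)"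
  proof -
    assume rn: "r = n - 1"
    have "r + 1 = n" using rn n3 by simp
    then show ?thesis unfolding Sn.A_def Sn.B_def binomF_def rn by (simp add: expv_def)
  qed
  have FS1: "r = 1 \<Longrightarrow> binomF n r a b = (Defs.mon S1.B - Defs.mon S1.A :: 'k mpoly)"
  proof -
    assume r1: "r = 1"
    have e: "{r+1..n} = {2..n}" "{1..r} = {1}" using r1 by auto
    show ?thesis unfolding S1.A_def S1.B_def binomF_def e by (simp add: expv_def)
  qed
  have ci_n: "Ann n (Defs.mon Sn.A - Defs.mon Sn.B :: 'k mpoly) =
           ideal_gen n
             (map (\<lambda>i. xpow i (a i + b i + 1)) [1..<n] @
              [xpow n (a n + 1) +
               (\<Sum>j=1..Min {a i div b i | i. i \<in> {1..n-1}} + 1.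
                  (\<Prod>i=1..n-1. xpow i (b i)) ^ j * xpow n (a n + 1 - j * b n))])"
    if c: "\<exists>i\<in>{1..n-1}. a i < ((a n + 1) div b n) * b i"
    by (rule Sn.ci_main[OF c]) auto
  have c1: "is_CI n (binomF n r a b :: 'k mpoly) \<longleftrightarrow>
           ((r = n - 1 \<and> (\<exists>i\<in>{1..n-1}. a i < ((a n + 1) div b n) * b i)) \<or>
            (r = 1 \<and> (\<exists>i\<in>{2..n}. a i < ((a 1 + 1) div b 1) * b i)))"
  proof (cases "r = n - 1")
    case rn: True
    have r1: "r \<noteq> 1" using rn n3 by simp
    show ?thesis
    proof (cases "\<exists>i\<in>{1..n-1}. a i < ((a n + 1) div b n) * b i")
      case True
      have "is_CI n (binomF n r a b :: 'k mpoly)"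
        unfolding FSn[OF rn] by (rule is_CI_of_eq[OF ci_n[OF True]]) (use n3 in simp)
      then show ?thesis using True rn by simp
    next
      case False
      interpret Sn': sconf_nc n n "{1..n-1}" a b
        using False by unfold_locales (auto simp: not_less)
      have "\<not> is_CI n (binomF n r a b :: 'k mpoly)" unfolding FSn[OF rn] by (rule Sn'.nonci)
      then show ?thesis using False r1 by simp
    qed
  next
    case rn: False
    show ?thesis
    proof (cases "r = 1")
      case r1: True
      have ci1: "Ann n (Defs.mon S1.A - Defs.mon S1.B :: 'k mpoly) =
           ideal_gen n
             (map (\<lambda>i. xpow i (a i + b i + 1)) [2..<n+1] @
              [xpow 1 (a 1 + 1) +
               (\<Sum>j=1..Min {a i div b i | i. i \<in> {2..n}} + 1.
                  (\<Prod>i\<in>{2..n}. xpow i (b i)) ^ j * xpow 1 (a 1 + 1 - j * b 1))])"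
        if c: "\<exists>i\<in>{2..n}. a i < ((a 1 + 1) div b 1) * b i"
        by (rule S1.ci_main[OF c]) auto
      show ?thesis
      proof (cases "\<exists>i\<in>{2..n}. a i < ((a 1 + 1) div b 1) * b i")
        case True
        have "is_CI n (Defs.mon S1.A - Defs.mon S1.B :: 'k mpoly)"
          by (rule is_CI_of_eq[OF ci1[OF True]]) (use n3 in simp)
        then have "is_CI n (binomF n r a b :: 'k mpoly)" unfolding FS1[OF r1] is_CI_swap .
        then show ?thesis using True r1 by simp
      next
        case False
        interpret S1': sconf_nc n 1 "{2..n}" a b
          using False by unfold_locales (auto simp: not_less)
        have "\<not> is_CI n (Defs.mon S1.A - Defs.mon S1.B :: 'k mpoly)" by (rule S1'.nonci)
        then have "\<not> is_CI n (binomF n r a b :: 'k mpoly)" unfolding FS1[OF r1] is_CI_swap .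
        then show ?thesis using False rn by simp
      qed
    next
      case r1: False
      have "\<not> is_CI n (binomF n r a b :: 'k mpoly)"
        by (rule nonci_mid) (use r rn r1 n3 b1 in auto)
      then show ?thesis using rn r1 by simp
    qed
  qed
  have c2: "r = n - 1 \<and> (\<exists>i\<in>{1..n-1}. a i < ((a n + 1) div b n) * b i) \<longrightarrow>
         Ann n (binomF n r a b :: 'k mpoly) =
           ideal_gen n
             (map (\<lambda>i. xpow i (a i + b i + 1)) [1..<n] @
              [xpow n (a n + 1) +
               (\<Sum>j=1..Min {a i div b i | i. i \<in> {1..n-1}} + 1.
                  (\<Prod>i=1..n-1. xpow i (b i)) ^ j * xpow n (a n + 1 - j * b n))])"
    using FSn ci_n by auto
  show ?thesis using c1 c2 by blast
qed

end
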